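(* Let $d\ge3$, $0\le\eta<\frac12$, $0<\tilde c<\frac1{288}$, $0<\theta\le\frac{27}{50}\pi$ and $b=\frac{\tilde c(1-2\eta)\theta}{\sqrt d}$. Suppose $D$ (with uniform marginal on $\mathbb{S}^{d-1}$) satisfies the $\eta$-bounded noise condition with respect to a unit vector $u$. Let $w_t$ be a unit vector with $\theta_t:=\theta(w_t,u)$ satisfying $\frac14\theta\le\theta_t\le\frac53\theta$, and let $(x_t,y_t)$ be drawn from $D$ conditioned on $R_t=\{(x,y): x\cdot w_t\in[\frac b2,b]\}$. Let $w_{t+1}=w_t-2\,\mathbb{1}\{y_t\,w_t\cdot x_t<0\}(w_t\cdot x_t)x_t$ and $\theta_{t+1}=\theta(w_{t+1},u)$. Then $$\mathbb{E}[\cos\theta_{t+1}-\cos\theta_t\mid\theta_t]\ \ge\ \frac{\tilde c}{100\pi}\,\frac{(1-2\eta)^2\theta^2}{d}.$$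
   Context: $\mathbb{S}^{d-1}$ is the unit sphere in $\mathbb{R}^d$; $D$ is a distribution on $\mathbb{S}^{d-1}\times\{-1,+1\}$ whose marginal is uniform on $\mathbb{S}^{d-1}$. $\theta(v_1,v_2)=\arccos(v_1\cdot v_2)$. $\eta$-bounded noise w.r.t. $u$: for all $x$, $\mathbb{P}[Y\neq\operatorname{sign}(u\cdot x)\mid X=x]\le\eta$. *)

theory Defs
  imports "HOL-Probability.Probability"
begin

definition vangle :: "real^'n \<Rightarrow> real^'n \<Rightarrow> real" where
  "vangle v1 v2 = arccos (v1 \<bullet> v2)"

text \<open>Uniform (normalised surface) measure on the unit sphere S^{d-1}:
  the push-forward of the uniform distribution on the unit ball under radial
  projection x \<mapsto> x/|x| (the cone-measure construction).\<close>
definition unif_sphere :: "(real^'n) measure" where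
  "unif_sphere = distr (uniform_measure lborel (ball 0 1)) borel (\<lambda>x. (1 / norm x) *\<^sub>R x)"

text \<open>eta-bounded noise w.r.t. u, stated for every measurable set A of instances:
  P[X \<in> A, Y \<noteq> sign(u.X)] \<le> eta * P[X \<in> A]
  (equivalent to P[Y \<noteq> sign(u.x) | X = x] \<le> eta for (almost) all x).\<close>
definition bounded_noise :: "((real^'n) \<times> real) measure \<Rightarrow> real \<Rightarrow> real^'n \<Rightarrow> bool" where
  "bounded_noise D eta u \<longleftrightarrow>
     (\<forall>A \<in> sets (borel :: (real^'n) measure).
        measure D {(x, y). x \<in> A \<and> y \<noteq> sgn (u \<bullet> x)} \<le> eta * measure D {(x, y). x \<in> A})"

end

theory Submission
  imports Defs
begin

lemma linear_measure_scale:
  fixes f :: "real^'n \<Rightarrow> real^'n"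
  assumes "linear f"
  shows "\<exists>c\<ge>0. \<forall>S\<in>lmeasurable. f ` S \<in> lmeasurable \<and> measure lebesgue (f ` S) = c * measure lebesgue S"
proof (rule induct_linear_elementary [OF \<open>linear f\<close>])
  fix f g :: "real^'n \<Rightarrow> real^'n"
  assume "linear f" "linear g"
    and f: "\<exists>c\<ge>0. \<forall>S\<in>lmeasurable. f ` S \<in> lmeasurable \<and> measure lebesgue (f ` S) = c * measure lebesgue S"
    and g: "\<exists>c\<ge>0. \<forall>S\<in>lmeasurable. g ` S \<in> lmeasurable \<and> measure lebesgue (g ` S) = c * measure lebesgue S"
  then obtain c1 c2 where c1: "c1 \<ge> 0" "\<forall>S\<in>lmeasurable. f ` S \<in> lmeasurable \<and> measure lebesgue (f ` S) = c1 * measure lebesgue S"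
    and c2: "c2 \<ge> 0" "\<forall>S\<in>lmeasurable. g ` S \<in> lmeasurable \<and> measure lebesgue (g ` S) = c2 * measure lebesgue S"
    by blast
  show "\<exists>c\<ge>0. \<forall>S\<in>lmeasurable. (f \<circ> g) ` S \<in> lmeasurable \<and> measure lebesgue ((f \<circ> g) ` S) = c * measure lebesgue S"
  proof (rule exI[of _ "c1*c2"], intro conjI ballI)
    fix S :: "(real^'n) set" assume S: "S \<in> lmeasurable"
    have gS: "g ` S \<in> lmeasurable" using c2 S by blast
    have e: "(f \<circ> g) ` S = f ` (g ` S)" by (simp add: image_comp)
    show "(f \<circ> g) ` S \<in> lmeasurable" unfolding e using c1 gS by blast
    show "measure lebesgue ((f \<circ> g) ` S) = c1 * c2 * measure lebesgue S"
      unfolding e using c1 c2 gS S by simp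
  qed (use c1 c2 in simp)
next
  fix f :: "real^'n \<Rightarrow> real^'n" and i
  assume "linear f" and 0: "\<And>x. f x $ i = 0"
  then have "\<not> inj f"
    by (metis (full_types) linear_injective_imp_surjective one_neq_zero surjE vec_component)
  show "\<exists>c\<ge>0. \<forall>S\<in>lmeasurable. f ` S \<in> lmeasurable \<and> measure lebesgue (f ` S) = c * measure lebesgue S"
  proof (rule exI[of _ 0], intro conjI ballI order_refl)
    fix S :: "(real^'n) set" assume "S \<in> lmeasurable"
    show "f ` S \<in> lmeasurable"
      using lmeasurable_iff_indicator_has_integral \<open>linear f\<close> \<open>\<not> inj f\<close> negligible_UNIV negligible_linear_singular_image by blast
    show "measure lebesgue (f ` S) = 0 * measure lebesgue S"
      by (simp, meson \<open>\<not> inj f\<close> \<open>linear f\<close> negligible_imp_measure0 negligible_linear_singular_image)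
  qed
next
  fix c :: "'n \<Rightarrow> real"
  show "\<exists>c'\<ge>0. \<forall>S\<in>lmeasurable. (\<lambda>a. \<chi> i. c i * a $ i) ` S \<in> lmeasurable \<and> measure lebesgue ((\<lambda>a. \<chi> i. c i * a $ i) ` S) = c' * measure lebesgue S"
    by (rule exI[of _ "\<bar>prod c UNIV\<bar>"]) (simp add: measurable_stretch measure_stretch)
next
  fix m n :: "'n"
  assume "m \<noteq> n"
  let ?h = "\<lambda>v::(real, 'n) vec. \<chi> i. v $ Transposition.transpose m n i"
  have lin: "linear ?h"
    by (rule linearI) (simp_all add: plus_vec_def scaleR_vec_def)
  have meq: "measure lebesgue (?h ` cbox a b) = 1 * measure lebesgue (cbox a b)" for a b
  proof (cases "cbox a b = {}")
    case True then show ?thesis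
      by simp
  next
    case False
    then have him: "?h ` (cbox a b) \<noteq> {}"
      by blast
    have eq: "?h ` (cbox a b) = cbox (?h a) (?h b)"
      by (auto simp: image_iff lambda_swap_Galois mem_box_cart) (metis transpose_involutory)+
    show ?thesis
      using him prod.permute [OF permutes_swap_id, where S=UNIV and g="\<lambda>i. (b - a)$i", symmetric]
      by (simp add: eq content_cbox_cart False)
  qed
  show "\<exists>c\<ge>0. \<forall>S\<in>lmeasurable. ?h ` S \<in> lmeasurable \<and> measure lebesgue (?h ` S) = c * measure lebesgue S"
  proof (rule exI[of _ 1], intro conjI ballI)
    fix S :: "(real^'n) set" assume S: "S \<in> lmeasurable"
    from measure_linear_sufficient [OF lin S meq]
    show "?h ` S \<in> lmeasurable" "measure lebesgue (?h ` S) = 1 * measure lebesgue S" by auto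
  qed simp
next
  fix m n :: "'n"
  assume "m \<noteq> n"
  let ?h = "\<lambda>v::(real, 'n) vec. \<chi> i. if i = m then v $ m + v $ n else v $ i"
  have lin: "linear ?h"
    by (rule linearI) (auto simp: algebra_simps plus_vec_def scaleR_vec_def vec_eq_iff)
  have meq: "measure lebesgue (?h ` (cbox a b)) = 1 * measure lebesgue (cbox a b)" for a b
  proof (cases "cbox a b = {}")
    case True then show ?thesis by simp
  next
    case False
    then have ne: "(+) (\<chi> i. if i = n then - a $ n else 0) ` cbox a b \<noteq> {}"
      by auto
    let ?v = "\<chi> i. if i = n then - a $ n else 0"
    have "?h ` cbox a b
          = (+) (\<chi> i. if i = m \<or> i = n then a $ n else 0) ` ?h ` (+) ?v ` (cbox a b)"
      using \<open>m \<noteq> n\<close> unfolding image_comp o_def by (force simp: vec_eq_iff)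
    then have "measure lebesgue (?h ` (cbox a b))
             = measure lebesgue ((\<lambda>v. \<chi> i. if i = m then v $ m + v $ n else v $ i) `
                                 (+) ?v ` cbox a b)"
      by (rule ssubst) (rule measure_translation)
    also have "\<dots> = measure lebesgue ((\<lambda>v. \<chi> i. if i = m then v $ m + v $ n else v $ i) ` cbox (?v +a) (?v + b))"
      by (metis (no_types, lifting) cbox_translation)
    also have "\<dots> = measure lebesgue ((+) ?v ` cbox a b)"
      apply (subst measure_shear_interval)
      using \<open>m \<noteq> n\<close> ne apply auto
      apply (simp add: cbox_translation)
      by (metis cbox_borel cbox_translation measure_completion sets_lborel)
    also have "\<dots> = measure lebesgue (cbox a b)"
      by (rule measure_translation)
    finally show ?thesis by simp
  qed
  show "\<exists>c\<ge>0. \<forall>S\<in>lmeasurable. ?h ` S \<in> lmeasurable \<and> measure lebesgue (?h ` S) = c * measure lebesgue S"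
  proof (rule exI[of _ 1], intro conjI ballI)
    fix S :: "(real^'n) set" assume S: "S \<in> lmeasurable"
    from measure_linear_sufficient [OF lin S meq]
    show "?h ` S \<in> lmeasurable" "measure lebesgue (?h ` S) = 1 * measure lebesgue S" by auto
  qed simp
qed

lemma orth_measure:
  fixes f :: "real^'n \<Rightarrow> real^'n"
  assumes f: "orthogonal_transformation f" and S: "S \<in> lmeasurable"
  shows "f ` S \<in> lmeasurable \<and> measure lebesgue (f ` S) = measure lebesgue S"
proof -
  obtain c where c: "c \<ge> 0" "\<forall>S\<in>lmeasurable. f ` S \<in> lmeasurable \<and> measure lebesgue (f ` S) = c * measure lebesgue S"
    using linear_measure_scale[OF orthogonal_transformation_linear[OF f]] by blast
  have "f ` ball 0 1 = ball 0 1"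
    using image_orthogonal_transformation_ball[OF f, of 0 1] f
    by (simp add: linear_0 orthogonal_transformation_linear)
  then have "measure lebesgue (ball (0::real^'n) 1) = c * measure lebesgue (ball (0::real^'n) 1)"
    using c by (metis lmeasurable_ball)
  moreover have "measure lebesgue (ball (0::real^'n) 1) > 0"
    using content_ball_pos[of 1 "0::real^'n"] by simp
  ultimately have "c = 1" by simp
  with c S show ?thesis by simp
qed

definition hrefl :: "real^'n \<Rightarrow> real^'n \<Rightarrow> real^'n" where
  "hrefl n x = x - (2 * (x \<bullet> n)) *\<^sub>R n"

lemma hrefl_inner: "norm n = 1 \<Longrightarrow> hrefl n x \<bullet> y = x \<bullet> hrefl n y"
  by (simp add: hrefl_def inner_diff_left inner_diff_right algebra_simps inner_commute)

lemma hrefl_refl: "norm n = 1 \<Longrightarrow> hrefl n (hrefl n x) = x"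
proof -
  assume "norm n = 1"
  then have "n \<bullet> n = 1" by (simp add: dot_square_norm)
  then show ?thesis by (simp add: hrefl_def inner_diff_left algebra_simps inner_commute)
qed

lemma hrefl_linear: "linear (hrefl n)"
  unfolding hrefl_def by (rule linearI) (auto simp: algebra_simps inner_add_left)

lemma hrefl_norm: "norm n = 1 \<Longrightarrow> norm (hrefl n x) = norm x"
proof -
  assume "norm n = 1"
  then have nn: "n \<bullet> n = 1" by (simp add: dot_square_norm)
  have "norm (hrefl n x) ^ 2 = norm x ^ 2"
    unfolding hrefl_def power2_norm_eq_inner
    by (simp add: inner_diff_left inner_diff_right nn algebra_simps inner_commute)
  then show ?thesis by (simp add: power2_eq_iff_nonneg)
qed

lemma hrefl_orth: "norm n = 1 \<Longrightarrow> orthogonal_transformation (hrefl n)"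
  by (simp add: orthogonal_transformation hrefl_linear hrefl_norm)

lemma hrefl_cont: "continuous_on UNIV (hrefl n)"
  unfolding hrefl_def by (intro continuous_intros)

lemma hrefl_meas[measurable]: "hrefl n \<in> borel_measurable borel"
  by (rule borel_measurable_continuous_onI[OF hrefl_cont])

lemma hrefl_vimage: "norm n = 1 \<Longrightarrow> hrefl n -` B = hrefl n ` B"
  by (auto simp: image_iff hrefl_refl) (metis hrefl_refl)

lemma hrefl_lborel:
  fixes n :: "real^'n"
  assumes n: "norm n = 1" and B: "B \<in> sets borel" and bB: "bounded B"
  shows "emeasure lborel (hrefl n -` B) = emeasure lborel B"
proof -
  have Bl: "B \<in> lmeasurable"
    using B bB by (intro bounded_set_imp_lmeasurable) auto
  have RB: "hrefl n -` B \<in> sets borel" using measurable_sets_borel[OF hrefl_meas B] by simp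
  have bRB: "bounded (hrefl n -` B)"
    using bB unfolding hrefl_vimage[OF n] bounded_iff by (auto simp: hrefl_norm[OF n])
  have eq: "measure lebesgue (hrefl n -` B) = measure lebesgue B"
    using orth_measure[OF hrefl_orth[OF n] Bl] hrefl_vimage[OF n] by simp
  have "emeasure lborel (hrefl n -` B) = ennreal (measure lborel (hrefl n -` B))"
    using emeasure_bounded_finite[OF bRB] by (intro emeasure_eq_ennreal_measure) simp
  also have "measure lborel (hrefl n -` B) = measure lebesgue (hrefl n -` B)"
    using RB by (simp add: measure_completion)
  also have "\<dots> = measure lebesgue B" by (rule eq)
  also have "\<dots> = measure lborel B" using B by (simp add: measure_completion)
  also have "ennreal (measure lborel B) = emeasure lborel B"
    using emeasure_bounded_finite[OF bB] by (intro emeasure_eq_ennreal_measure[symmetric]) simp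
  finally show ?thesis .
qed

abbreviation UB :: "(real^'n) measure" where
  "UB \<equiv> uniform_measure lborel (ball 0 1)"

abbreviation nrm :: "real^'n \<Rightarrow> real^'n" where
  "nrm \<equiv> (\<lambda>x. (1 / norm x) *\<^sub>R x)"

lemma nrm_meas[measurable]: "nrm \<in> borel_measurable borel"
  by measurable

lemma ball_pos: "emeasure lborel (ball (0::real^'n) 1) \<noteq> 0"
proof -
  have "measure lborel (ball (0::real^'n) 1) > 0"
    using content_ball_pos[of 1 "0::real^'n"] by simp
  then show ?thesis
    using emeasure_lborel_ball_finite[of "0::real^'n" 1]
    by (metis emeasure_eq_ennreal_measure ennreal_eq_0_iff less_le not_less order_less_irrefl top.not_eq_extremum)
qed

lemma UB_prob: "prob_space (UB :: (real^'n) measure)"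
  by (rule prob_space_uniform_measure[OF ball_pos]) (use emeasure_lborel_ball_finite[of "0::real^'n" 1] in simp)

lemma unif_prob: "prob_space (unif_sphere :: (real^'n) measure)"
  unfolding unif_sphere_def by (rule prob_space.prob_space_distr[OF UB_prob]) simp

lemma sets_unif[simp, measurable_cong]: "sets (unif_sphere :: (real^'n) measure) = sets borel"
  unfolding unif_sphere_def by simp

lemma space_unif[simp]: "space (unif_sphere :: (real^'n) measure) = UNIV"
  unfolding unif_sphere_def by simp

lemma UB_refl:
  fixes n :: "real^'n" assumes n: "norm n = 1"
  shows "distr UB borel (hrefl n) = UB"
proof (rule measure_eqI)
  show "sets (distr UB borel (hrefl n)) = sets UB" by simp
  fix A :: "(real^'n) set" assume "A \<in> sets (distr UB borel (hrefl n))"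
  then have A: "A \<in> sets borel" by simp
  have eq: "ball 0 1 \<inter> hrefl n -` A = hrefl n -` (ball 0 1 \<inter> A)"
    by (auto simp: hrefl_norm[OF n])
  have "emeasure (distr UB borel (hrefl n)) A = emeasure UB (hrefl n -` A)"
    using A by (simp add: emeasure_distr)
  also have "\<dots> = emeasure lborel (ball 0 1 \<inter> hrefl n -` A) / emeasure lborel (ball (0::real^'n) 1)"
    using measurable_sets_borel[OF hrefl_meas A] by simp
  also have "\<dots> = emeasure lborel (ball 0 1 \<inter> A) / emeasure lborel (ball (0::real^'n) 1)"
    unfolding eq using A by (subst hrefl_lborel[OF n]) auto
  also have "\<dots> = emeasure UB A" using A by simp
  finally show "emeasure (distr UB borel (hrefl n)) A = emeasure UB A" .
qed

lemma unif_refl: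
  fixes n :: "real^'n" assumes n: "norm n = 1"
  shows "distr unif_sphere borel (hrefl n) = unif_sphere"
proof -
  have comm: "hrefl n \<circ> nrm = nrm \<circ> hrefl n"
    by (rule ext) (simp add: hrefl_norm[OF n] linear_scale[OF hrefl_linear])
  have "distr unif_sphere borel (hrefl n) = distr UB borel (hrefl n \<circ> nrm)"
    unfolding unif_sphere_def by (subst distr_distr) auto
  also have "\<dots> = distr UB borel (nrm \<circ> hrefl n)" by (simp add: comm)
  also have "\<dots> = distr (distr UB borel (hrefl n)) borel nrm"
    by (subst distr_distr) auto
  also have "\<dots> = unif_sphere" unfolding UB_refl[OF n] unif_sphere_def ..
  finally show ?thesis .
qed

lemma unif_refl_integral:
  fixes n :: "real^'n" and g :: "real^'n \<Rightarrow> real"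
  assumes n: "norm n = 1" and g: "g \<in> borel_measurable borel"
  shows "integral\<^sup>L unif_sphere (\<lambda>x. g (hrefl n x)) = integral\<^sup>L unif_sphere g"
proof -
  have "integral\<^sup>L unif_sphere (\<lambda>x. g (hrefl n x)) = integral\<^sup>L (distr unif_sphere borel (hrefl n)) g"
    using g by (subst integral_distr) auto
  then show ?thesis by (simp add: unif_refl[OF n])
qed

lemma unif_AE_norm: "AE x in (unif_sphere :: (real^'n) measure). norm x = 1 \<or> x = 0"
  unfolding unif_sphere_def
  by (subst AE_distr_iff) (auto simp: norm_eq_zero)

lemma hrefl_inner2: "norm n = 1 \<Longrightarrow> hrefl n a \<bullet> hrefl n b = a \<bullet> b"
  by (simp add: hrefl_inner hrefl_refl)

lemma refl_pair:
  fixes p q n :: "real^'n" and G :: "real \<Rightarrow> real \<Rightarrow> real"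
  assumes G[measurable]: "(\<lambda>z. G (fst z) (snd z)) \<in> borel_measurable borel" and n: "norm n = 1"
  shows "integral\<^sup>L unif_sphere (\<lambda>x. G (x \<bullet> p) (x \<bullet> q)) = integral\<^sup>L unif_sphere (\<lambda>x. G (x \<bullet> hrefl n p) (x \<bullet> hrefl n q))"
proof -
  have m: "(\<lambda>x. G (x \<bullet> p) (x \<bullet> q)) \<in> borel_measurable borel"
  proof -
    have "(\<lambda>x::real^'n. (x \<bullet> p, x \<bullet> q)) \<in> measurable borel (borel \<Otimes>\<^sub>M borel)" by measurable
    then have "(\<lambda>x::real^'n. (x \<bullet> p, x \<bullet> q)) \<in> measurable borel borel" by (simp add: borel_prod)
    from measurable_compose[OF this G] show ?thesis by simp
  qed
  show ?thesis
    using unif_refl_integral[OF n m] by (simp add: hrefl_inner[OF n])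
qed

lemma refl_to:
  fixes p p' :: "real^'n"
  assumes p: "norm p = 1" and p': "norm p' = 1" and ne: "p \<noteq> p'"
  defines "n \<equiv> (1 / norm (p - p')) *\<^sub>R (p - p')"
  shows "norm n = 1" "hrefl n p = p'" "\<And>z. z \<bullet> p = z \<bullet> p' \<Longrightarrow> hrefl n z = z"
proof -
  have nz: "norm (p - p') \<noteq> 0" using ne by simp
  show "norm n = 1" unfolding n_def using nz by simp
  have pp: "p \<bullet> p = 1" "p' \<bullet> p' = 1" using p p' by (simp_all add: dot_square_norm)
  have sq: "norm (p - p') ^ 2 = 2 - 2 * (p \<bullet> p')"
    unfolding power2_norm_eq_inner by (simp add: inner_diff_left inner_diff_right pp inner_commute)
  have "p \<bullet> n = (p \<bullet> (p - p')) / norm (p - p')" unfolding n_def by simp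
  also have "p \<bullet> (p - p') = norm (p - p') ^ 2 / 2" using sq by (simp add: inner_diff_right pp)
  finally have pn: "2 * (p \<bullet> n) * (1 / norm (p - p')) = 1" using nz by (simp add: power2_eq_square)
  have "(2 * (p \<bullet> n)) *\<^sub>R n = (2 * (p \<bullet> n) * (1 / norm (p - p'))) *\<^sub>R (p - p')"
    unfolding n_def by simp
  then show "hrefl n p = p'" unfolding hrefl_def pn by simp
  fix z assume "z \<bullet> p = z \<bullet> p'"
  then have "z \<bullet> n = 0" unfolding n_def by (simp add: inner_diff_right)
  then show "hrefl n z = z" by (simp add: hrefl_def)
qed

lemma pair_inv:
  fixes p q p' q' :: "real^'n" and G :: "real \<Rightarrow> real \<Rightarrow> real"
  assumes G[measurable]: "(\<lambda>z. G (fst z) (snd z)) \<in> borel_measurable borel"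
    and p: "norm p = 1" and q: "norm q = 1" and pq: "p \<bullet> q = 0"
    and p': "norm p' = 1" and q': "norm q' = 1" and pq': "p' \<bullet> q' = 0"
  shows "integral\<^sup>L unif_sphere (\<lambda>x. G (x \<bullet> p) (x \<bullet> q)) = integral\<^sup>L unif_sphere (\<lambda>x. G (x \<bullet> p') (x \<bullet> q'))"
proof -
  have step2: "integral\<^sup>L unif_sphere (\<lambda>x. G (x \<bullet> p') (x \<bullet> q1)) = integral\<^sup>L unif_sphere (\<lambda>x. G (x \<bullet> p') (x \<bullet> q'))"
    if q1: "norm q1 = 1" "p' \<bullet> q1 = 0" for q1
  proof (cases "q1 = q'")
    case False
    define n where "n = (1 / norm (q1 - q')) *\<^sub>R (q1 - q')"
    have "norm n = 1" "hrefl n q1 = q'" "hrefl n p' = p'"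
      using refl_to[OF q1(1) q' False] q1(2) pq' unfolding n_def[symmetric]
      by (auto simp: inner_commute)
    then show ?thesis using refl_pair[OF G, of n p' q1] by simp
  qed simp
  show ?thesis
  proof (cases "p = p'")
    case True then show ?thesis using step2[OF q] pq by simp
  next
    case False
    define n where "n = (1 / norm (p - p')) *\<^sub>R (p - p')"
    have n: "norm n = 1" and np: "hrefl n p = p'"
      using refl_to[OF p p' False] unfolding n_def[symmetric] by auto
    have "integral\<^sup>L unif_sphere (\<lambda>x. G (x \<bullet> p) (x \<bullet> q)) = integral\<^sup>L unif_sphere (\<lambda>x. G (x \<bullet> p') (x \<bullet> hrefl n q))"
      using refl_pair[OF G n, of p q] np by simp
    also have "\<dots> = integral\<^sup>L unif_sphere (\<lambda>x. G (x \<bullet> p') (x \<bullet> q'))"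
    proof (rule step2)
      show "norm (hrefl n q) = 1" using hrefl_norm[OF n] q by simp
      show "p' \<bullet> hrefl n q = 0" using hrefl_inner2[OF n, of p q] np pq by simp
    qed
    finally show ?thesis .
  qed
qed

lemma lin5:
  fixes f1 f2 f3 f4 f5 :: "'a \<Rightarrow> real"
  assumes "integrable M f1" "integrable M f2" "integrable M f3" "integrable M f4" "integrable M f5"
  shows "integral\<^sup>L M (\<lambda>x. a1 * f1 x + f2 x + a3 * f3 x + f4 x + a5 * f5 x)
    = a1 * integral\<^sup>L M f1 + integral\<^sup>L M f2 + a3 * integral\<^sup>L M f3 + integral\<^sup>L M f4 + a5 * integral\<^sup>L M f5"
  using assms by simp

lemma meas_prod: "(f :: real \<times> real \<Rightarrow> real) \<in> borel_measurable (borel \<Otimes>\<^sub>M borel) \<Longrightarrow> f \<in> borel_measurable borel"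
  by (simp add: borel_prod)

lemma unif_int:
  fixes f :: "real^'n \<Rightarrow> real"
  assumes f: "f \<in> borel_measurable borel" and B: "\<And>x. norm x \<le> 1 \<Longrightarrow> \<bar>f x\<bar> \<le> B"
  shows "integrable unif_sphere f"
proof -
  interpret prob_space "unif_sphere :: (real^'n) measure" by (rule unif_prob)
  show ?thesis
  proof (rule integrable_const_bound[where B=B])
    show "AE x in unif_sphere. norm (f x) \<le> B"
      using unif_AE_norm by eventually_elim (use B in auto)
  qed (use f in simp)
qed

lemma coord_le1: "norm (x::real^'n) \<le> 1 \<Longrightarrow> \<bar>x$i\<bar> \<le> 1"
  using component_le_norm_cart[of x i] by simp

lemma sumsq: "(\<Sum>i\<in>UNIV-{k}. (x$i)^2) = (norm (x::real^'n))^2 - (x$k)^2"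
proof -
  have "(norm x)^2 = x \<bullet> x" by (rule power2_norm_eq_inner)
  also have "\<dots> = (\<Sum>i\<in>UNIV. (x$i)^2)"
    by (simp add: inner_vec_def power2_eq_square)
  also have "\<dots> = (x$k)^2 + (\<Sum>i\<in>UNIV-{k}. (x$i)^2)"
    by (simp add: sum.remove[of UNIV k])
  finally show ?thesis by simp
qed

context
  fixes h :: "real \<Rightarrow> real"
  assumes h_meas[measurable]: "h \<in> borel_measurable borel"
    and h_bd: "\<And>t. 0 \<le> h t \<and> h t \<le> 1"
    and h0: "h 0 = 0"
begin

lemma hb: "\<bar>h t\<bar> \<le> 1" using h_bd[of t] by simp

lemma coord_inv:
  fixes w v :: "real^'n"
  assumes w: "norm w = 1" and v: "norm v = 1" and wv: "w \<bullet> v = 0" and jk: "j \<noteq> k"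
  shows "integral\<^sup>L unif_sphere (\<lambda>x. h (x \<bullet> w) * (x \<bullet> v)^m) = integral\<^sup>L unif_sphere (\<lambda>x::real^'n. h (x$k) * (x$j)^m)"
proof -
  have G: "(\<lambda>z. h (fst z) * (snd z)^m) \<in> borel_measurable borel" by (rule meas_prod) measurable
  have o: "axis k 1 \<bullet> axis j (1::real) = 0" using jk by (simp add: inner_axis_axis)
  have c: "\<And>(x::real^'n) i. x \<bullet> axis i 1 = x$i" by (simp add: inner_axis)
  from pair_inv[OF G w v wv norm_axis_1 norm_axis_1 o]
  show ?thesis by (simp add: c)
qed

lemma one_inv:
  fixes w :: "real^'n" and g :: "real \<Rightarrow> real"
  assumes w: "norm w = 1" and v: "norm v = 1" and wv: "w \<bullet> v = 0" and jk: "j \<noteq> k"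
    and g[measurable]: "g \<in> borel_measurable borel"
  shows "integral\<^sup>L unif_sphere (\<lambda>x. g (x \<bullet> w)) = integral\<^sup>L unif_sphere (\<lambda>x::real^'n. g (x$k))"
proof -
  have G: "(\<lambda>z. g (fst z) * (snd z)^0) \<in> borel_measurable borel" by (rule meas_prod) measurable
  have o: "axis k 1 \<bullet> axis j (1::real) = 0" using jk by (simp add: inner_axis_axis)
  have c: "\<And>(x::real^'n) i. x \<bullet> axis i 1 = x$i" by (simp add: inner_axis)
  from pair_inv[OF G w v wv norm_axis_1 norm_axis_1 o]
  show ?thesis by (simp add: c)
qed

lemma int_mono_coord: "integrable unif_sphere (\<lambda>x::real^'n. h (x$k) * ((x$i)^a * (x$j)^c))"
proof (rule unif_int[where B=1])
  fix x :: "real^'n" assume "norm x \<le> 1"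
  then have "\<bar>x$i\<bar> \<le> 1" "\<bar>x$j\<bar> \<le> 1" by (auto intro: coord_le1)
  then have "\<bar>(x$i)^a\<bar> \<le> 1" "\<bar>(x$j)^c\<bar> \<le> 1" by (auto simp: power_abs intro: power_le_one)
  then show "\<bar>h (x$k) * ((x$i)^a * (x$j)^c)\<bar> \<le> 1"
    using hb[of "x$k"] by (auto simp: abs_mult intro!: mult_le_one)
qed measurable

lemma M2:
  fixes w v :: "real^'n"
  assumes w: "norm w = 1" and v: "norm v = 1" and wv: "w \<bullet> v = 0" and d2: "CARD('n) \<ge> 2"
  shows "(real CARD('n) - 1) * integral\<^sup>L unif_sphere (\<lambda>x. h (x \<bullet> w) * (x \<bullet> v)^2)
       = integral\<^sup>L unif_sphere (\<lambda>x. h (x \<bullet> w) * (1 - (x \<bullet> w)^2))"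
proof -
  obtain k :: 'n where True by blast
  let ?K = "UNIV - {k}"
  have cK: "card ?K = CARD('n) - 1" by (simp add: card_Diff_singleton)
  have "(real CARD('n) - 1) * integral\<^sup>L unif_sphere (\<lambda>x. h (x \<bullet> w) * (x \<bullet> v)^2)
      = (\<Sum>j\<in>?K. integral\<^sup>L unif_sphere (\<lambda>x. h (x \<bullet> w) * (x \<bullet> v)^2))"
    using cK by (simp add: of_nat_diff)
  also have "\<dots> = (\<Sum>j\<in>?K. integral\<^sup>L unif_sphere (\<lambda>x. h (x$k) * (x$j)^2))"
    by (intro sum.cong refl coord_inv[OF w v wv]) auto
  also have "\<dots> = integral\<^sup>L unif_sphere (\<lambda>x. \<Sum>j\<in>?K. h (x$k) * (x$j)^2)"
  proof -
    have "integrable unif_sphere (\<lambda>x::real^'n. h (x$k) * (x$j)^2)" for j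
      using int_mono_coord[of k j 2 j 0] by simp
    then show ?thesis using Bochner_Integration.integral_sum[where I="?K" and M=unif_sphere and f="\<lambda>j x. h (x$k) * (x$j)^2"] by simp
  qed
  also have "\<dots> = integral\<^sup>L unif_sphere (\<lambda>x. h (x$k) * (1 - (x$k)^2))"
  proof (rule integral_cong_AE)
    show "AE x in unif_sphere. (\<Sum>j\<in>?K. h (x$k) * (x$j)^2) = h (x$k) * (1 - (x$k)^2)"
      using unif_AE_norm
    proof eventually_elim
      case (elim x)
      have e: "(\<Sum>j\<in>?K. h (x$k) * (x$j)^2) = h (x$k) * ((norm x)^2 - (x$k)^2)"
        by (simp add: sum_distrib_left[symmetric] sumsq)
      from elim show ?case
      proof
        assume "norm x = 1" then show ?thesis using e by simp
      next
        assume "x = 0" then show ?thesis using h0 by simp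
      qed
    qed
  qed measurable
  also have "\<dots> = integral\<^sup>L unif_sphere (\<lambda>x. h (x \<bullet> w) * (1 - (x \<bullet> w)^2))"
  proof -
    have "card ?K \<ge> 1" using cK d2 by simp
    then have "UNIV - {k} \<noteq> {}" by (metis card.empty not_one_le_zero)
    then obtain j :: 'n where "j \<noteq> k" by blast
    have g: "(\<lambda>t. h t * (1 - t^2)) \<in> borel_measurable borel" by measurable
    show ?thesis using one_inv[OF w v wv \<open>j \<noteq> k\<close> g] by simp
  qed
  finally show ?thesis .
qed


lemma hrefl_axis: "(hrefl (axis p 1) x) $ l = (if l = p then - (x$p) else (x::real^'n)$l)"
proof -
  have "x \<bullet> axis p 1 = x$p" by (simp add: inner_axis)
  then show ?thesis by (simp add: hrefl_def axis_def)
qed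

lemma odd_zero:
  fixes k p r :: "'n::finite"
  assumes pk: "p \<noteq> k" and pr: "p \<noteq> r"
  shows "integral\<^sup>L unif_sphere (\<lambda>x::real^'n. h (x$k) * ((x$r)^3 * (x$p)^1)) = 0"
proof -
  let ?g = "\<lambda>x::real^'n. h (x$k) * ((x$r)^3 * (x$p)^1)"
  have g: "?g \<in> borel_measurable borel" by measurable
  have "integral\<^sup>L unif_sphere (\<lambda>x. ?g (hrefl (axis p 1) x)) = integral\<^sup>L unif_sphere ?g"
    by (rule unif_refl_integral[OF norm_axis_1 g])
  moreover have "(\<lambda>x. ?g (hrefl (axis p 1) x)) = (\<lambda>x. - ?g x)"
    using pk pr by (simp add: hrefl_axis)
  ultimately have "integral\<^sup>L unif_sphere ?g = - integral\<^sup>L unif_sphere ?g" by simp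
  then show ?thesis by simp
qed

lemma C_eq:
  fixes i j k :: "'n::finite"
  assumes ij: "i \<noteq> j" and ik: "i \<noteq> k" and jk: "j \<noteq> k"
  shows "integral\<^sup>L unif_sphere (\<lambda>x::real^'n. h (x$k) * ((x$i)^2 * (x$j)^2))
       = integral\<^sup>L unif_sphere (\<lambda>x::real^'n. h (x$k) * (x$j)^4) / 3"
proof -
  define q :: "real^'n" where "q = (1 / sqrt 2) *\<^sub>R (axis i 1 + axis j 1)"
  have xq: "x \<bullet> q = (x$i + x$j) / sqrt 2" for x :: "real^'n"
    by (simp add: q_def inner_add_right inner_axis)
  have "(norm q)^2 = q \<bullet> q" by (rule power2_norm_eq_inner)
  also have "\<dots> = 1" using ij
    by (simp add: q_def inner_add_left inner_add_right inner_axis_axis)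
  finally have nq: "norm q = 1" using norm_ge_zero[of q] by (auto simp: power2_eq_1_iff)
  have kq: "axis k 1 \<bullet> q = 0" using ik jk
    by (simp add: q_def inner_add_right inner_axis_axis)
  have c: "\<And>(x::real^'n) l. x \<bullet> axis l 1 = x$l" by (simp add: inner_axis)
  have E1: "integral\<^sup>L unif_sphere (\<lambda>x::real^'n. h (x \<bullet> axis k 1) * (x \<bullet> q)^4)
      = integral\<^sup>L unif_sphere (\<lambda>x::real^'n. h (x$k) * (x$j)^4)"
    by (rule coord_inv[OF norm_axis_1 nq kq jk])
  have s4: "(sqrt 2)^4 = (4::real)"
    by (metis num_double numeral_times_numeral power2_eq_square power_mult real_sqrt_pow2 zero_le_numeral)
  have E2: "(\<lambda>x::real^'n. h (x \<bullet> axis k 1) * (x \<bullet> q)^4)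
      = (\<lambda>x. (1/4) * (h (x$k) * ((x$i)^4 * (x$j)^0)) + h (x$k) * ((x$i)^3 * (x$j)^1)
            + (3/2) * (h (x$k) * ((x$i)^2 * (x$j)^2)) + h (x$k) * ((x$j)^3 * (x$i)^1)
            + (1/4) * (h (x$k) * ((x$j)^4 * (x$i)^0)))"
    by (rule ext) (simp add: c xq power_divide s4 field_simps power2_eq_square power3_eq_cube power4_eq_xxxx)
  have E3: "integral\<^sup>L unif_sphere (\<lambda>x. (1/4) * (h (x$k) * ((x$i)^4 * (x$j)^0)) + h (x$k) * ((x$i)^3 * (x$j)^1)
            + (3/2) * (h (x$k) * ((x$i)^2 * (x$j)^2)) + h (x$k) * ((x$j)^3 * (x$i)^1)
            + (1/4) * (h (x$k) * ((x$j)^4 * (x$i)^0)))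
     = (1/4) * integral\<^sup>L unif_sphere (\<lambda>x::real^'n. h (x$k) * ((x$i)^4 * (x$j)^0))
       + integral\<^sup>L unif_sphere (\<lambda>x::real^'n. h (x$k) * ((x$i)^3 * (x$j)^1))
       + (3/2) * integral\<^sup>L unif_sphere (\<lambda>x::real^'n. h (x$k) * ((x$i)^2 * (x$j)^2))
       + integral\<^sup>L unif_sphere (\<lambda>x::real^'n. h (x$k) * ((x$j)^3 * (x$i)^1))
       + (1/4) * integral\<^sup>L unif_sphere (\<lambda>x::real^'n. h (x$k) * ((x$j)^4 * (x$i)^0))"
    by (rule lin5) (rule int_mono_coord)+
  have E4: "integral\<^sup>L unif_sphere (\<lambda>x::real^'n. h (x$k) * ((x$i)^3 * (x$j)^1)) = 0"
    using odd_zero[of j k i] ij jk by simp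
  have E5: "integral\<^sup>L unif_sphere (\<lambda>x::real^'n. h (x$k) * ((x$j)^3 * (x$i)^1)) = 0"
    using odd_zero[of i k j] ij ik by simp
  have ki: "axis k 1 \<bullet> axis i (1::real) = 0" using ik by (simp add: inner_axis_axis)
  have E6: "integral\<^sup>L unif_sphere (\<lambda>x::real^'n. h (x$k) * ((x$i)^4 * (x$j)^0))
      = integral\<^sup>L unif_sphere (\<lambda>x::real^'n. h (x$k) * (x$j)^4)"
    using coord_inv[OF norm_axis_1 norm_axis_1 ki jk, of 4] by (simp add: c)
  have E7: "integral\<^sup>L unif_sphere (\<lambda>x::real^'n. h (x$k) * ((x$j)^4 * (x$i)^0))
      = integral\<^sup>L unif_sphere (\<lambda>x::real^'n. h (x$k) * (x$j)^4)" by simp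
  show ?thesis using E1 E2 E3 E4 E5 E6 E7 by simp
qed

lemma M4:
  fixes w v :: "real^'n"
  assumes w: "norm w = 1" and v: "norm v = 1" and wv: "w \<bullet> v = 0" and d3: "CARD('n) \<ge> 3"
  shows "(real CARD('n) - 1) * (real CARD('n) + 1) / 3 * integral\<^sup>L unif_sphere (\<lambda>x. h (x \<bullet> w) * (x \<bullet> v)^4)
       = integral\<^sup>L unif_sphere (\<lambda>x. h (x \<bullet> w) * (1 - (x \<bullet> w)^2)^2)"
proof -
  obtain k :: 'n where True by blast
  let ?K = "UNIV - {k}"
  let ?d = "real CARD('n)"
  define Q where "Q = integral\<^sup>L unif_sphere (\<lambda>x. h (x \<bullet> w) * (x \<bullet> v)^4)"
  have cK: "card ?K = CARD('n) - 1" by (simp add: card_Diff_singleton)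
  have Qj: "integral\<^sup>L unif_sphere (\<lambda>x::real^'n. h (x$k) * (x$j)^4) = Q" if "j \<in> ?K" for j
    unfolding Q_def using coord_inv[OF w v wv, of j k 4] that by simp
  have Cij: "integral\<^sup>L unif_sphere (\<lambda>x::real^'n. h (x$k) * ((x$i)^2 * (x$j)^2)) = Q / 3"
    if "i \<in> ?K" "j \<in> ?K" "i \<noteq> j" for i j
    using C_eq[of i j k] Qj[of j] that by simp
  have row: "(\<Sum>j\<in>?K. integral\<^sup>L unif_sphere (\<lambda>x::real^'n. h (x$k) * ((x$i)^2 * (x$j)^2)))
      = Q + (?d - 2) * Q / 3" if i: "i \<in> ?K" for i
  proof -
    have "(\<Sum>j\<in>?K. integral\<^sup>L unif_sphere (\<lambda>x::real^'n. h (x$k) * ((x$i)^2 * (x$j)^2)))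
      = integral\<^sup>L unif_sphere (\<lambda>x::real^'n. h (x$k) * ((x$i)^2 * (x$i)^2))
        + (\<Sum>j\<in>?K-{i}. integral\<^sup>L unif_sphere (\<lambda>x::real^'n. h (x$k) * ((x$i)^2 * (x$j)^2)))"
      using i by (simp add: sum.remove[of ?K i])
    also have "integral\<^sup>L unif_sphere (\<lambda>x::real^'n. h (x$k) * ((x$i)^2 * (x$i)^2)) = Q"
      using Qj[OF i] by (simp add: power2_eq_square power4_eq_xxxx mult.assoc)
    also have "(\<Sum>j\<in>?K-{i}. integral\<^sup>L unif_sphere (\<lambda>x::real^'n. h (x$k) * ((x$i)^2 * (x$j)^2)))
        = (\<Sum>j\<in>?K-{i}. Q / 3)"
      by (intro sum.cong refl Cij) (use i in auto)
    also have "\<dots> = (?d - 2) * Q / 3"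
      using i cK d3 by (simp add: card_Diff_singleton of_nat_diff)
    finally show ?thesis .
  qed
  have intij: "integrable unif_sphere (\<lambda>x::real^'n. h (x$k) * ((x$i)^2 * (x$j)^2))" for i j
    by (rule int_mono_coord)
  have "integral\<^sup>L unif_sphere (\<lambda>x. h (x \<bullet> w) * (1 - (x \<bullet> w)^2)^2)
      = integral\<^sup>L unif_sphere (\<lambda>x::real^'n. h (x$k) * (1 - (x$k)^2)^2)"
  proof -
    have "card ?K \<ge> 1" using cK d3 by simp
    then have "?K \<noteq> {}" by (metis card.empty not_one_le_zero)
    then obtain j :: 'n where "j \<noteq> k" by blast
    have g: "(\<lambda>t. h t * (1 - t^2)^2) \<in> borel_measurable borel" by measurable
    show ?thesis using one_inv[OF w v wv \<open>j \<noteq> k\<close> g] by simp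
  qed
  also have "\<dots> = integral\<^sup>L unif_sphere (\<lambda>x::real^'n. \<Sum>i\<in>?K. \<Sum>j\<in>?K. h (x$k) * ((x$i)^2 * (x$j)^2))"
  proof (rule integral_cong_AE)
    show "AE x in unif_sphere. h (x$k) * (1 - (x$k)^2)^2 = (\<Sum>i\<in>?K. \<Sum>j\<in>?K. h (x$k) * ((x$i)^2 * (x$j)^2))"
      using unif_AE_norm
    proof eventually_elim
      case (elim x)
      have e: "(\<Sum>i\<in>?K. \<Sum>j\<in>?K. h (x$k) * ((x$i)^2 * (x$j)^2)) = h (x$k) * ((norm x)^2 - (x$k)^2)^2"
      proof -
        have "(\<Sum>i\<in>?K. \<Sum>j\<in>?K. h (x$k) * ((x$i)^2 * (x$j)^2))
            = h (x$k) * ((\<Sum>i\<in>?K. (x$i)^2) * (\<Sum>j\<in>?K. (x$j)^2))"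
        proof -
          have p: "(\<Sum>i\<in>?K. (x$i)^2) * (\<Sum>j\<in>?K. (x$j)^2) = (\<Sum>i\<in>?K. \<Sum>j\<in>?K. (x$i)^2 * (x$j)^2)"
            by (rule sum_product)
          show ?thesis by (subst p) (simp only: sum_distrib_left)
        qed
        then show ?thesis by (simp only: sumsq) (simp add: power2_eq_square)
      qed
      from elim show ?case
      proof
        assume "norm x = 1" then show ?thesis using e by simp
      next
        assume "x = 0" then show ?thesis using h0 by simp
      qed
    qed
  qed measurable
  also have "\<dots> = (\<Sum>i\<in>?K. \<Sum>j\<in>?K. integral\<^sup>L unif_sphere (\<lambda>x::real^'n. h (x$k) * ((x$i)^2 * (x$j)^2)))"
  proof -
    have "integral\<^sup>L unif_sphere (\<lambda>x::real^'n. \<Sum>j\<in>?K. h (x$k) * ((x$i)^2 * (x$j)^2))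
        = (\<Sum>j\<in>?K. integral\<^sup>L unif_sphere (\<lambda>x::real^'n. h (x$k) * ((x$i)^2 * (x$j)^2)))" for i
      using Bochner_Integration.integral_sum[where I="?K" and M=unif_sphere and f="\<lambda>j x. h (x$k) * ((x$i)^2 * (x$j)^2)"] intij by simp
    moreover have "integrable unif_sphere (\<lambda>x::real^'n. \<Sum>j\<in>?K. h (x$k) * ((x$i)^2 * (x$j)^2))" for i
      using intij by (intro Bochner_Integration.integrable_sum) simp
    ultimately show ?thesis
      using Bochner_Integration.integral_sum[where I="?K" and M=unif_sphere and f="\<lambda>i x. \<Sum>j\<in>?K. h (x$k) * ((x$i)^2 * (x$j)^2)"]
      by simp
  qed
  also have "\<dots> = (\<Sum>i\<in>?K. Q + (?d - 2) * Q / 3)"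
    by (intro sum.cong refl row) simp
  also have "\<dots> = (?d - 1) * (Q + (?d - 2) * Q / 3)"
    using cK d3 by (simp add: of_nat_diff)
  also have "\<dots> = (?d - 1) * (?d + 1) / 3 * Q" by (simp add: field_simps)
  finally show ?thesis unfolding Q_def by simp
qed
end

lemma flip:
  fixes w v :: "real^'n" and G :: "real \<Rightarrow> real \<Rightarrow> real"
  assumes G: "(\<lambda>z. G (fst z) (snd z)) \<in> borel_measurable borel" and v: "norm v = 1" and wv: "w \<bullet> v = 0"
  shows "integral\<^sup>L unif_sphere (\<lambda>x. G (x \<bullet> w) (x \<bullet> v)) = integral\<^sup>L unif_sphere (\<lambda>x. G (x \<bullet> w) (- (x \<bullet> v)))"
proof -
  have vv: "v \<bullet> v = 1" using v by (simp add: dot_square_norm)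
  have "hrefl v w = w" using wv by (simp add: hrefl_def)
  moreover have "hrefl v v = - v" unfolding hrefl_def vv by (simp add: vec_eq_iff)
  ultimately show ?thesis using refl_pair[OF G v, of w v] by simp
qed

lemma poly_ineq: "0 \<le> (r::real) \<Longrightarrow> r^2 - r^4/4 \<le> r"
proof -
  assume r: "0 \<le> r"
  have "0 \<le> r * (1 - r + r^3/4)"
  proof (cases "r \<le> 2")
    case True
    have "r^3 - 4*r + 4 = (r-1)^2*(r+2) + (2 - r)"
      by (simp add: power2_eq_square power3_eq_cube algebra_simps)
    moreover have "0 \<le> (r-1)^2*(r+2)" using r by simp
    ultimately have "0 \<le> r^3 - 4*r + 4" using True by linarith
    then show ?thesis using r by simp
  next
    case False
    then have "r^3 = r * r^2" by (simp add: power3_eq_cube power2_eq_square)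
    moreover have "r^2 \<ge> 4"
    proof -
      have "2 * 2 \<le> r * r" using mult_mono[of 2 r 2 r] False by simp
      then show ?thesis by (simp add: power2_eq_square)
    qed
    ultimately have "r^3 \<ge> 4*r" using r mult_left_mono[of 4 "r^2" r] by (simp add: mult.commute)
    then show ?thesis using r by simp
  qed
  then show ?thesis by (simp add: algebra_simps power2_eq_square power4_eq_xxxx power3_eq_cube)
qed

lemma abs_ineq:
  fixes c t :: real assumes c: "0 < c"
  shows "(c/2) * t^2 - (c^3/32) * t^4 \<le> \<bar>t\<bar>"
proof -
  have "(c * \<bar>t\<bar> / 2)^2 - (c * \<bar>t\<bar> / 2)^4/4 \<le> c * \<bar>t\<bar> / 2"
    by (rule poly_ineq) (use c in simp)
  then have "(c/2) * ((c/2) * t^2 - (c^3/32) * t^4) \<le> (c/2) * \<bar>t\<bar>"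
    by (simp add: power_mult_distrib power_divide field_simps power2_eq_square power4_eq_xxxx power3_eq_cube)
  then show ?thesis using c by simp
qed

lemma inner_le1: "norm (x::real^'n) \<le> 1 \<Longrightarrow> norm w = 1 \<Longrightarrow> \<bar>x \<bullet> w\<bar> \<le> 1"
  using Cauchy_Schwarz_ineq2[of x w] by (simp add: mult_le_one)

lemma alg_id: "A \<noteq> 0 \<Longrightarrow> B \<noteq> 0 \<Longrightarrow> (c::real)/2 * (15 * P / (16 * A)) - D * c/32 * (3 * P / (A * B)) = c * P * ((15 * B - 3 * D) / (32 * (A * B)))"
  by (simp add: field_simps)

lemma frac_aux: "0 < (M::real) \<Longrightarrow> 0 < K \<Longrightarrow> M \<le> K * N \<Longrightarrow> 1 / K \<le> N / M"
  by (simp add: field_simps)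

lemma int_gen:
  fixes w v :: "real^'n" and G :: "real \<Rightarrow> real \<Rightarrow> real"
  assumes G: "(\<lambda>z. G (fst z) (snd z)) \<in> borel_measurable borel"
    and B: "\<And>a s. \<bar>a\<bar> \<le> 1 \<Longrightarrow> \<bar>s\<bar> \<le> 1 \<Longrightarrow> \<bar>G a s\<bar> \<le> B"
    and w: "norm w = 1" and v: "norm v = 1"
  shows "integrable unif_sphere (\<lambda>x. G (x \<bullet> w) (x \<bullet> v))"
proof (rule unif_int[where B=B])
  have "(\<lambda>x::real^'n. (x \<bullet> w, x \<bullet> v)) \<in> measurable borel (borel \<Otimes>\<^sub>M borel)" by measurable
  then have "(\<lambda>x::real^'n. (x \<bullet> w, x \<bullet> v)) \<in> measurable borel borel" by (simp add: borel_prod)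
  from measurable_compose[OF this G] show "(\<lambda>x. G (x \<bullet> w) (x \<bullet> v)) \<in> borel_measurable borel" by simp
  fix x :: "real^'n" assume "norm x \<le> 1"
  then show "\<bar>G (x \<bullet> w) (x \<bullet> v)\<bar> \<le> B" using B inner_le1 w v by blast
qed

context
  fixes b :: real
  assumes b0: "0 < b" and b1: "b \<le> 1/4"
begin

abbreviation hb :: "real \<Rightarrow> real" where "hb \<equiv> indicator {b/2..b}"

lemma hb_meas: "hb \<in> borel_measurable borel" by measurable
lemma hb_bd: "0 \<le> hb t \<and> hb t \<le> 1" by (simp split: split_indicator)
lemma hb0: "hb 0 = 0" using b0 by (simp split: split_indicator)

lemma F3:
  fixes w v :: "real^'n"
  assumes w: "norm w = 1" and v: "norm v = 1" and wv: "w \<bullet> v = 0" and d3: "CARD('n) \<ge> 3"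
  shows "integral\<^sup>L unif_sphere (\<lambda>x. hb (x \<bullet> w)) / (3 * sqrt (real CARD('n)))
      \<le> integral\<^sup>L unif_sphere (\<lambda>x. hb (x \<bullet> w) * \<bar>x \<bullet> v\<bar>)"
proof -
  define D where "D = real CARD('n)"
  define c where "c = sqrt D"
  have D3: "D \<ge> 3" unfolding D_def using d3 by simp
  have c0: "c > 0" unfolding c_def using D3 by simp
  have cc: "c * c = D" unfolding c_def using D3 by simp
  define P where "P = integral\<^sup>L unif_sphere (\<lambda>x. hb (x \<bullet> w))"
  define m2 where "m2 = integral\<^sup>L unif_sphere (\<lambda>x. hb (x \<bullet> w) * (x \<bullet> v)^2)"
  define m4 where "m4 = integral\<^sup>L unif_sphere (\<lambda>x. hb (x \<bullet> w) * (x \<bullet> v)^4)"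
  define ms where "ms = integral\<^sup>L unif_sphere (\<lambda>x. hb (x \<bullet> w) * \<bar>x \<bullet> v\<bar>)"
  have Gm: "(\<lambda>z. hb (fst z) * F (snd z)) \<in> borel_measurable borel" if "F \<in> borel_measurable borel" for F :: "real \<Rightarrow> real"
    by (rule meas_prod) (use that in measurable)
  have intF: "integrable unif_sphere (\<lambda>x. hb (x \<bullet> w) * F (x \<bullet> v))"
    if "F \<in> borel_measurable borel" "\<And>s. \<bar>s\<bar> \<le> 1 \<Longrightarrow> \<bar>F s\<bar> \<le> B" for F :: "real \<Rightarrow> real" and B
  proof (rule int_gen[OF Gm[OF that(1)] _ w v])
    fix a s :: real assume "\<bar>a\<bar> \<le> 1" "\<bar>s\<bar> \<le> 1"
    then show "\<bar>hb a * F s\<bar> \<le> max B 0" using that(2)[of s]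
      by (auto simp: abs_mult split: split_indicator)
  qed
  have intA: "integrable unif_sphere (\<lambda>x. hb (x \<bullet> w) * A (x \<bullet> w))"
    if "A \<in> borel_measurable borel" "\<And>s. \<bar>s\<bar> \<le> 1 \<Longrightarrow> \<bar>A s\<bar> \<le> B" for A :: "real \<Rightarrow> real" and B
  proof -
    have "integrable unif_sphere (\<lambda>x. (\<lambda>a s. hb a * A a) (x \<bullet> w) (x \<bullet> v))"
    proof (rule int_gen[OF _ _ w v])
      show "(\<lambda>z::real\<times>real. hb (fst z) * A (fst z)) \<in> borel_measurable borel" by (rule meas_prod) (use that in measurable)
      fix a s :: real assume "\<bar>a\<bar> \<le> 1" "\<bar>s\<bar> \<le> 1"
      then show "\<bar>hb a * A a\<bar> \<le> max B 0" using that(2)[of a]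
        by (auto simp: abs_mult split: split_indicator)
    qed
    then show ?thesis by simp
  qed
  have hbw: "hb (x \<bullet> w) \<noteq> 0 \<Longrightarrow> b/2 \<le> x \<bullet> w \<and> x \<bullet> w \<le> b" for x :: "real^'n"
    by (simp split: split_indicator_asm)
  have a2: "(x \<bullet> w)^2 \<le> 1/16" if "hb (x \<bullet> w) \<noteq> 0" for x :: "real^'n"
  proof -
    have "0 \<le> x \<bullet> w" "x \<bullet> w \<le> 1/4" using hbw[OF that] b0 b1 by auto
    then have "(x \<bullet> w)^2 \<le> (1/4)^2" by (intro power_mono) auto
    then show ?thesis by (simp add: power2_eq_square)
  qed
  have M2i: "(D - 1) * m2 = integral\<^sup>L unif_sphere (\<lambda>x. hb (x \<bullet> w) * (1 - (x \<bullet> w)^2))"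
    unfolding D_def m2_def using M2[of hb, OF hb_meas hb_bd hb0 w v wv] d3 by simp
  have M4i: "(D - 1) * (D + 1) / 3 * m4 = integral\<^sup>L unif_sphere (\<lambda>x. hb (x \<bullet> w) * (1 - (x \<bullet> w)^2)^2)"
    unfolding D_def m4_def using M4[of hb, OF hb_meas hb_bd hb0 w v wv d3] by simp
  have int1: "integrable unif_sphere (\<lambda>x. hb (x \<bullet> w) * (1 - (x \<bullet> w)^2))"
  proof (rule intA[where B=1])
    fix s :: real assume "\<bar>s\<bar> \<le> 1"
    then have "s^2 \<le> 1" by (simp add: abs_square_le_1)
    then show "\<bar>1 - s^2\<bar> \<le> 1" by simp
  qed measurable
  have int2: "integrable unif_sphere (\<lambda>x. hb (x \<bullet> w) * (1 - (x \<bullet> w)^2)^2)"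
  proof (rule intA[where B=1])
    fix s :: real assume "\<bar>s\<bar> \<le> 1"
    then have "s^2 \<le> 1" by (simp add: abs_square_le_1)
    then have "0 \<le> 1 - s^2" "1 - s^2 \<le> 1" by auto
    then show "\<bar>(1 - s^2)^2\<bar> \<le> 1" by (simp add: power_le_one)
  qed measurable
  have int0: "integrable unif_sphere (\<lambda>x. hb (x \<bullet> w))"
    using intA[where A="\<lambda>_. 1" and B=1] by simp
  have lo2: "15/16 * P \<le> (D - 1) * m2"
  proof -
    have "15/16 * P = integral\<^sup>L unif_sphere (\<lambda>x. 15/16 * hb (x \<bullet> w))" unfolding P_def by simp
    also have "\<dots> \<le> integral\<^sup>L unif_sphere (\<lambda>x. hb (x \<bullet> w) * (1 - (x \<bullet> w)^2))"
    proof (rule integral_mono[OF _ int1])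
      show "integrable unif_sphere (\<lambda>x. 15/16 * hb (x \<bullet> w))" using int0 by simp
      fix x :: "real^'n"
      show "15/16 * hb (x \<bullet> w) \<le> hb (x \<bullet> w) * (1 - (x \<bullet> w)^2)"
        using a2[of x] by (cases "hb (x \<bullet> w) = 0") (auto split: split_indicator)
    qed
    finally show ?thesis using M2i by simp
  qed
  have up4: "(D - 1) * (D + 1) / 3 * m4 \<le> P"
  proof -
    have "integral\<^sup>L unif_sphere (\<lambda>x. hb (x \<bullet> w) * (1 - (x \<bullet> w)^2)^2) \<le> P"
      unfolding P_def
    proof (rule integral_mono[OF int2 int0])
      fix x :: "real^'n"
      show "hb (x \<bullet> w) * (1 - (x \<bullet> w)^2)^2 \<le> hb (x \<bullet> w)"
      proof (cases "hb (x \<bullet> w) = 0")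
        case False
        then have "0 \<le> 1 - (x \<bullet> w)^2" "1 - (x \<bullet> w)^2 \<le> 1" using a2[of x] by auto
        then have "(1 - (x \<bullet> w)^2)^2 \<le> 1" by (simp add: power_le_one)
        then show ?thesis by (simp split: split_indicator)
      qed simp
    qed
    then show ?thesis using M4i by simp
  qed
  have lo: "c/2 * m2 - c^3/32 * m4 \<le> ms"
  proof -
    have i2: "integrable unif_sphere (\<lambda>x. hb (x \<bullet> w) * (x \<bullet> v)^2)"
      by (rule intF[where B=1]) (auto simp: abs_square_le_1)
    have i4: "integrable unif_sphere (\<lambda>x. hb (x \<bullet> w) * (x \<bullet> v)^4)"
    proof (rule intF[where B=1])
      fix s :: real assume "\<bar>s\<bar> \<le> 1"
      then have "\<bar>s\<bar>^4 \<le> 1" by (intro power_le_one) auto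
      then show "\<bar>s^4\<bar> \<le> 1" by (simp add: power_abs)
    qed measurable
    have ia: "integrable unif_sphere (\<lambda>x. hb (x \<bullet> w) * \<bar>x \<bullet> v\<bar>)"
      by (rule intF[where B=1]) auto
    have "c/2 * m2 - c^3/32 * m4 = integral\<^sup>L unif_sphere (\<lambda>x. c/2 * (hb (x \<bullet> w) * (x \<bullet> v)^2) - c^3/32 * (hb (x \<bullet> w) * (x \<bullet> v)^4))"
      unfolding m2_def m4_def using i2 i4 by simp
    also have "\<dots> \<le> ms" unfolding ms_def
    proof (rule integral_mono[OF _ ia])
      show "integrable unif_sphere (\<lambda>x. c/2 * (hb (x \<bullet> w) * (x \<bullet> v)^2) - c^3/32 * (hb (x \<bullet> w) * (x \<bullet> v)^4))"
        using i2 i4 by simp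
      fix x :: "real^'n"
      have "hb (x \<bullet> w) * (c/2 * (x \<bullet> v)^2 - c^3/32 * (x \<bullet> v)^4) \<le> hb (x \<bullet> w) * \<bar>x \<bullet> v\<bar>"
        using abs_ineq[OF c0, of "x \<bullet> v"] by (intro mult_left_mono) (auto split: split_indicator)
      then show "c/2 * (hb (x \<bullet> w) * (x \<bullet> v)^2) - c^3/32 * (hb (x \<bullet> w) * (x \<bullet> v)^4) \<le> hb (x \<bullet> w) * \<bar>x \<bullet> v\<bar>"
        by (simp add: algebra_simps)
    qed
    finally show ?thesis .
  qed
  have P0: "P \<ge> 0" unfolding P_def by (rule integral_nonneg_AE) (simp split: split_indicator)
  have m2lo: "15 * P / (16 * (D - 1)) \<le> m2" using lo2 D3 by (simp add: field_simps)
  have m4up: "m4 \<le> 3 * P / ((D - 1) * (D + 1))"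
  proof -
    have pos: "(D - 1) * (D + 1) > 0" using D3 by simp
    have "m4 * ((D - 1) * (D + 1)) \<le> 3 * P" using up4 by (simp add: field_simps)
    then show ?thesis by (simp add: pos_le_divide_eq[OF pos])
  qed
  have c3: "c^3 = D * c" using cc by (simp add: power3_eq_cube)
  have "P / (3 * c) \<le> c/2 * (15 * P / (16 * (D - 1))) - D * c/32 * (3 * P / ((D - 1) * (D + 1)))"
  proof -
    have e1: "P / (3 * c) = c * P * (1 / (3 * D))" using cc c0 D3 by (simp add: field_simps)
    have e2: "c/2 * (15 * P / (16 * (D - 1))) - D * c/32 * (3 * P / ((D - 1) * (D + 1)))
        = c * P * ((12 * D + 15) / (32 * ((D - 1) * (D + 1))))"
    proof -
      have "D - 1 \<noteq> 0" "D + 1 \<noteq> 0" using D3 by auto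
      from alg_id[OF this, of c P D] show ?thesis by (simp add: algebra_simps)
    qed
    have poly: "32 * ((D - 1) * (D + 1)) \<le> (12 * D + 15) * (3 * D)"
    proof -
      have "0 \<le> D * D" by simp
      then show ?thesis using D3 by (simp add: algebra_simps)
    qed
    have "1 / (3 * D) \<le> (12 * D + 15) / (32 * ((D - 1) * (D + 1)))"
    proof -
      have pos: "0 < 32 * ((D - 1) * (D + 1))" "0 < 3 * D" using D3 by auto
      show ?thesis using frac_aux[OF pos poly[unfolded mult.commute[of "12 * D + 15"]]] by (simp add: mult.commute)
    qed
    then have "c * P * (1 / (3 * D)) \<le> c * P * ((12 * D + 15) / (32 * ((D - 1) * (D + 1))))"
      using c0 P0 by (intro mult_left_mono) auto
    then show ?thesis using e1 e2 by simp
  qed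
  also have "\<dots> \<le> c/2 * m2 - D * c/32 * m4"
    using m2lo m4up c0 D3 by (intro diff_mono mult_left_mono) auto
  also have "\<dots> \<le> ms" using lo c3 by simp
  finally show ?thesis unfolding P_def ms_def c_def D_def .
qed

end

context
  fixes D :: "((real^'n) \<times> real) measure"
  assumes D_prob: "prob_space D"
    and D_sets: "sets D = sets (borel :: ((real^'n) \<times> real) measure)"
    and D_marg: "distr D borel fst = unif_sphere"
begin

lemma D_space: "space D = UNIV"
  using sets_eq_imp_space_eq[OF D_sets] by simp

lemma fst_D[measurable]: "fst \<in> measurable D borel"
proof -
  have "(fst :: (real^'n) \<times> real \<Rightarrow> real^'n) \<in> measurable (borel \<Otimes>\<^sub>M borel) borel" by measurable
  then show ?thesis by (simp add: borel_prod measurable_cong_sets[OF D_sets refl])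
qed

lemma D_int: "(g :: real^'n \<Rightarrow> real) \<in> borel_measurable borel \<Longrightarrow> integral\<^sup>L D (\<lambda>z. g (fst z)) = integral\<^sup>L unif_sphere g"
  using integral_distr[OF fst_D, of g] D_marg by simp

lemma D_measure: "A \<in> sets borel \<Longrightarrow> measure D {z. fst z \<in> A} = measure unif_sphere A"
proof -
  assume A: "A \<in> sets borel"
  have "measure (distr D borel fst) A = measure D (fst -` A \<inter> space D)"
    using A by (intro measure_distr) auto
  then show ?thesis using D_marg by (simp add: D_space vimage_def)
qed

lemma D_AE_norm: "AE z in D. norm (fst z) = 1 \<or> fst z = 0"
proof -
  have "AE x in distr D borel fst. norm x = 1 \<or> x = 0" unfolding D_marg by (rule unif_AE_norm)
  then show ?thesis by (subst (asm) AE_distr_iff) auto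
qed


lemma snd_D[measurable]: "snd \<in> measurable D borel"
proof -
  have "(snd :: (real^'n) \<times> real \<Rightarrow> real) \<in> measurable (borel \<Otimes>\<^sub>M borel) borel" by measurable
  then show ?thesis by (simp add: borel_prod measurable_cong_sets[OF D_sets refl])
qed

lemma Nset_sets: "{(x, y). y \<noteq> sgn (u \<bullet> x)} \<in> sets D"
proof -
  have "{z \<in> space D. snd z \<noteq> sgn (u \<bullet> fst z)} \<in> sets D"
    by measurable
  moreover have "{z \<in> space D. snd z \<noteq> sgn (u \<bullet> fst z)} = {(x, y). y \<noteq> sgn (u \<bullet> x)}"
    by (auto simp: D_space)
  ultimately show ?thesis by simp
qed

lemma fstA_sets: "A \<in> sets borel \<Longrightarrow> fst -` A \<in> sets D"
  using measurable_sets[OF fst_D, of A] by (simp add: D_space)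

lemma D_int_bdd:
  fixes f :: "(real^'n) \<times> real \<Rightarrow> real" and B :: real
  assumes f: "f \<in> borel_measurable D" and B: "\<And>z. \<bar>f z\<bar> \<le> B"
  shows "integrable D f"
proof -
  interpret prob_space D by (rule D_prob)
  show ?thesis by (rule integrable_const_bound[where B=B]) (use f B in auto)
qed

lemma noise_int:
  fixes g :: "real^'n \<Rightarrow> real"
  assumes noise: "bounded_noise D eta u" and eta0: "0 \<le> eta"
    and g[measurable]: "g \<in> borel_measurable borel" and gB: "\<And>x. 0 \<le> g x"
    and intS: "integrable unif_sphere g"
  shows "integral\<^sup>L D (\<lambda>z. indicator {(x, y). y \<noteq> sgn (u \<bullet> x)} z * g (fst z)) \<le> eta * integral\<^sup>L unif_sphere g"
proof -
  interpret D: prob_space D by (rule D_prob)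
  interpret S: prob_space "unif_sphere :: (real^'n) measure" by (rule unif_prob)
  define N where "N = ({(x, y). y \<noteq> sgn (u \<bullet> x)} :: ((real^'n) \<times> real) set)"
  have N: "N \<in> sets D" unfolding N_def by (rule Nset_sets)
  define M1 where "M1 = distr (density D (indicator N)) borel fst"
  define M2 where "M2 = scale_measure (ennreal eta) (unif_sphere :: (real^'n) measure)"
  have fstd: "fst \<in> measurable (density D (indicator N)) borel"
    using fst_D by (simp add: measurable_cong_sets[OF sets_density refl])
  have sM: "sets M1 = sets M2" unfolding M1_def M2_def by simp
  have le: "M1 \<le> M2"
  proof (subst le_measure[OF sM], intro ballI)
    fix A assume "A \<in> sets M1"
    then have A: "A \<in> sets borel" unfolding M1_def by simp
    have fA: "fst -` A \<in> sets D" by (rule fstA_sets[OF A])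
    have "emeasure M1 A = emeasure (density D (indicator N)) (fst -` A \<inter> space (density D (indicator N)))"
      unfolding M1_def by (rule emeasure_distr[OF fstd A])
    also have "\<dots> = emeasure (density D (indicator N)) (fst -` A)" by (simp add: D_space)
    also have "\<dots> = (\<integral>\<^sup>+ z. indicator N z * indicator (fst -` A) z \<partial>D)"
      using N fA by (intro emeasure_density) auto
    also have "\<dots> = (\<integral>\<^sup>+ z. indicator (N \<inter> fst -` A) z \<partial>D)"
      by (simp add: indicator_inter_arith)
    also have "\<dots> = emeasure D (N \<inter> fst -` A)" using N fA by simp
    also have "\<dots> = ennreal (measure D {(x, y). x \<in> A \<and> y \<noteq> sgn (u \<bullet> x)})"
    proof -
      have "N \<inter> fst -` A = {(x, y). x \<in> A \<and> y \<noteq> sgn (u \<bullet> x)}" unfolding N_def by auto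
      then show ?thesis by (simp add: D.emeasure_eq_measure)
    qed
    also have "\<dots> \<le> ennreal (eta * measure D {(x, y). x \<in> A})"
      using noise A unfolding bounded_noise_def by (intro ennreal_leI) auto
    also have "measure D {(x, y). x \<in> A} = measure unif_sphere A"
    proof -
      have "{(x, y). x \<in> A} = ({z. fst z \<in> A} :: ((real^'n) \<times> real) set)" by auto
      then show ?thesis using D_measure[OF A] by simp
    qed
    also have "ennreal (eta * measure unif_sphere A) = emeasure M2 A"
      unfolding M2_def using eta0 by (simp add: S.emeasure_eq_measure ennreal_mult)
    finally show "emeasure M1 A \<le> emeasure M2 A" .
  qed
  have intD: "integrable D (\<lambda>z. indicator N z * g (fst z))"
  proof -
    have "integrable (distr D borel fst) g" using intS D_marg by simp
    then have "integrable D (\<lambda>z. g (fst z))" by (subst (asm) integrable_distr_eq) auto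
    from integrable_mult_indicator[OF N this] show ?thesis by simp
  qed
  have "ennreal (integral\<^sup>L D (\<lambda>z. indicator N z * g (fst z))) = (\<integral>\<^sup>+ z. ennreal (indicator N z * g (fst z)) \<partial>D)"
    using intD gB by (intro nn_integral_eq_integral[symmetric]) auto
  also have "\<dots> = (\<integral>\<^sup>+ z. indicator N z * ennreal (g (fst z)) \<partial>D)"
    by (intro nn_integral_cong) (simp split: split_indicator)
  also have "\<dots> = (\<integral>\<^sup>+ z. ennreal (g (fst z)) \<partial>density D (indicator N))"
    using N by (subst nn_integral_density) auto
  also have "\<dots> = (\<integral>\<^sup>+ x. ennreal (g x) \<partial>M1)"
    unfolding M1_def by (subst nn_integral_distr[OF fstd]) auto
  also have "\<dots> \<le> (\<integral>\<^sup>+ x. ennreal (g x) \<partial>M2)"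
    by (rule nn_integral_mono_measure[OF sM le])
  also have "\<dots> = ennreal eta * (\<integral>\<^sup>+ x. ennreal (g x) \<partial>unif_sphere)"
    unfolding M2_def by (subst nn_integral_scale_measure) auto
  also have "(\<integral>\<^sup>+ x. ennreal (g x) \<partial>unif_sphere) = ennreal (integral\<^sup>L unif_sphere g)"
    using intS gB by (intro nn_integral_eq_integral) auto
  also have "ennreal eta * ennreal (integral\<^sup>L unif_sphere g) = ennreal (eta * integral\<^sup>L unif_sphere g)"
  proof -
    have "0 \<le> integral\<^sup>L unif_sphere g" using gB by (intro integral_nonneg_AE) auto
    then show ?thesis using eta0 by (simp add: ennreal_mult)
  qed
  finally have "ennreal (integral\<^sup>L D (\<lambda>z. indicator N z * g (fst z))) \<le> ennreal (eta * integral\<^sup>L unif_sphere g)" .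
  moreover have "0 \<le> eta * integral\<^sup>L unif_sphere g"
    using eta0 gB by (intro mult_nonneg_nonneg integral_nonneg_AE) auto
  ultimately show ?thesis unfolding N_def by (simp add: ennreal_le_iff)
qed
end

lemma sin_lb: "0 \<le> (y::real) \<Longrightarrow> y \<le> 2 \<Longrightarrow> y / 3 \<le> sin y"
proof -
  assume y: "0 \<le> y" "y \<le> 2"
  have S: "(\<Sum>m<3. sin_coeff m * y ^ m) = y"
    by (simp add: eval_nat_numeral sin_coeff_def)
  have "\<bar>sin y - y\<bar> \<le> inverse (fact 3) * \<bar>y\<bar> ^ 3"
    using Maclaurin_sin_bound[of y 3] unfolding S .
  then have "\<bar>sin y - y\<bar> \<le> y^3/6" using y by (simp add: eval_nat_numeral)
  then have "y - y^3/6 \<le> sin y" using abs_ge_minus_self[of "sin y - y"] by linarith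
  moreover have "y^3 \<le> 4 * y"
  proof -
    have "y * y \<le> 2 * 2" using mult_mono[OF y(2) y(2)] y by simp
    then have "y * (y * y) \<le> y * 4" using y by (intro mult_left_mono) auto
    then show ?thesis by (simp add: power3_eq_cube mult.commute)
  qed
  ultimately show ?thesis by simp
qed

lemma sin_theta_lb:
  fixes theta t :: real
  assumes th: "0 < theta" "theta \<le> 27/50 * pi" and t: "theta / 4 \<le> t" "t \<le> 5/3 * theta"
  shows "theta / 20 \<le> sin t"
proof (cases "t \<le> 2")
  case True
  then have "t / 3 \<le> sin t" using sin_lb[of t] th t by simp
  then show ?thesis using t th by simp
next
  case False
  have pi1: "pi \<le> 3.1415926535899" and pi2: "3.141592653588 \<le> pi" by (rule pi_approx)+
  have tle: "t \<le> 9/10 * pi" using t th by simp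
  have "sin t = sin (pi - t)" by simp
  moreover have "(pi - t) / 3 \<le> sin (pi - t)" using sin_lb[of "pi - t"] tle False pi1 pi2 by simp
  moreover have "theta / 20 \<le> (pi - t) / 3" using tle th pi1 pi2 by simp
  ultimately show ?thesis by simp
qed

lemma arccos_out: "1 < \<bar>t\<bar> \<Longrightarrow> arccos t = arccos 2"
proof -
  assume t: "1 < \<bar>t\<bar>"
  have "(\<lambda>x. 0 \<le> x \<and> x \<le> pi \<and> cos x = t) = (\<lambda>x. 0 \<le> x \<and> x \<le> pi \<and> cos x = 2)"
  proof (rule ext)
    fix x :: real
    have "cos x \<noteq> t" using t by (metis abs_cos_le_one not_less)
    moreover have "cos x \<noteq> 2" by (metis abs_cos_le_one abs_numeral numeral_le_one_iff semiring_norm(69))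
    ultimately show "(0 \<le> x \<and> x \<le> pi \<and> cos x = t) = (0 \<le> x \<and> x \<le> pi \<and> cos x = 2)"
      by auto
  qed
  then show ?thesis unfolding arccos_def by simp
qed

definition cac :: "real \<Rightarrow> real" where "cac t = (if \<bar>t\<bar> \<le> 1 then t else cos (arccos 2))"

lemma cos_arccos_cac: "cos (arccos t) = cac t"
  unfolding cac_def using arccos_out[of t] by (auto simp: abs_le_iff)

lemma cac_meas[measurable]: "cac \<in> borel_measurable borel"
  unfolding cac_def by measurable

lemma band_pos:
  fixes w v :: "real^'n"
  assumes b: "0 < b" "b \<le> 1" and w: "norm w = 1" and v: "norm v = 1" and wv: "w \<bullet> v = 0"
  shows "0 < measure unif_sphere {x. x \<bullet> w \<in> {b/2..b}}"
proof -
  define Oset where "Oset = {y::real^'n. b/2 * norm y < y \<bullet> w} \<inter> {y. y \<bullet> w < b * norm y} \<inter> {y. norm y < 1}"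
  have oO: "open Oset" unfolding Oset_def
    by (intro open_Int open_Collect_less continuous_intros)
  define t where "t = 3 * b / 4"
  have t: "0 < t" "t < 1" using b unfolding t_def by auto
  define y0 where "y0 = (1/2) *\<^sub>R (t *\<^sub>R w + sqrt (1 - t^2) *\<^sub>R v)"
  have ww: "w \<bullet> w = 1" and vv: "v \<bullet> v = 1" using w v by (simp_all add: dot_square_norm)
  have vw: "v \<bullet> w = 0" using wv by (simp add: inner_commute)
  have y0w: "y0 \<bullet> w = t / 2" unfolding y0_def using vw ww by (simp add: inner_add_left)
  have "(norm y0)^2 = y0 \<bullet> y0" by (rule power2_norm_eq_inner)
  also have "\<dots> = 1/4 * (t^2 + (sqrt (1 - t^2))^2)"
    unfolding y0_def using wv ww vv
    by (simp add: inner_add_left inner_add_right inner_commute power2_eq_square algebra_simps)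
  also have "\<dots> = 1/4" using t by (simp add: abs_square_less_1 less_imp_le)
  finally have "(norm y0)^2 = (1/2)^2" by (simp add: power2_eq_square)
  then have ny0: "norm y0 = 1/2" using norm_ge_zero[of y0] by (simp add: power2_eq_iff_nonneg)
  have "y0 \<in> Oset" unfolding Oset_def by (simp add: ny0 y0w t_def b)
  then obtain r where r: "r > 0" "ball y0 r \<subseteq> Oset" using oO open_contains_ball by blast
  have Osub: "Oset \<subseteq> ball 0 1 \<inter> nrm -` {x. x \<bullet> w \<in> {b/2..b}}"
  proof
    fix y assume "y \<in> Oset"
    then have h: "b/2 * norm y < y \<bullet> w" "y \<bullet> w < b * norm y" "norm y < 1" unfolding Oset_def by auto
    have "norm y > 0"
    proof (rule ccontr)
      assume "\<not> norm y > 0"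
      then have "norm y = 0" using norm_ge_zero[of y] by linarith
      then show False using h by simp
    qed
    then have "nrm y \<bullet> w = (y \<bullet> w) / norm y" by simp
    moreover have "b/2 \<le> (y \<bullet> w) / norm y" "(y \<bullet> w) / norm y \<le> b"
      using h \<open>norm y > 0\<close> by (simp_all add: field_simps)
    ultimately show "y \<in> ball 0 1 \<inter> nrm -` {x. x \<bullet> w \<in> {b/2..b}}" using h by simp
  qed
  have Bm: "{x::real^'n. x \<bullet> w \<in> {b/2..b}} \<in> sets borel" by measurable
  have Vm: "nrm -` {x::real^'n. x \<bullet> w \<in> {b/2..b}} \<in> sets borel"
    using measurable_sets_borel[OF nrm_meas Bm] by simp
  have "0 < emeasure lborel (ball y0 r)"
  proof -
    have "0 < measure lborel (ball y0 r)" using content_ball_pos[OF r(1)] by simp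
    then show ?thesis using emeasure_lborel_ball_finite[of y0 r]
      by (simp add: emeasure_eq_measure2 emeasure_eq_ennreal_measure less_top)
  qed
  also have "\<dots> \<le> emeasure lborel (ball 0 1 \<inter> nrm -` {x. x \<bullet> w \<in> {b/2..b}})"
    using r Osub Vm by (intro emeasure_mono) auto
  finally have pos: "0 < emeasure lborel (ball 0 1 \<inter> nrm -` {x::real^'n. x \<bullet> w \<in> {b/2..b}})" .
  have "emeasure unif_sphere {x::real^'n. x \<bullet> w \<in> {b/2..b}}
      = emeasure UB (nrm -` {x. x \<bullet> w \<in> {b/2..b}})"
    unfolding unif_sphere_def using Bm by (subst emeasure_distr) auto
  also have "\<dots> = emeasure lborel (ball 0 1 \<inter> nrm -` {x. x \<bullet> w \<in> {b/2..b}}) / emeasure lborel (ball (0::real^'n) 1)"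
    using Vm by simp
  finally have epos: "0 < emeasure unif_sphere {x::real^'n. x \<bullet> w \<in> {b/2..b}}"
    using pos emeasure_lborel_ball_finite[of "0::real^'n" 1]
    by (simp add: ennreal_zero_less_divide less_top)
  interpret S: prob_space "unif_sphere :: (real^'n) measure" by (rule unif_prob)
  show ?thesis using epos by (simp add: S.emeasure_eq_measure)
qed

lemma refl_norm1:
  fixes w x :: "real^'n"
  assumes w: "norm w = 1" and x: "norm x = 1"
  shows "norm (w - (2 * (w \<bullet> x)) *\<^sub>R x) = 1"
proof -
  have ww: "w \<bullet> w = 1" and xx: "x \<bullet> x = 1" using w x by (simp_all add: dot_square_norm)
  have "(norm (w - (2 * (w \<bullet> x)) *\<^sub>R x))^2 = 1"
    unfolding power2_norm_eq_inner
    by (simp add: inner_diff_left inner_diff_right ww xx inner_commute[of x w] algebra_simps power2_eq_square)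
  then show ?thesis using norm_ge_zero[of "w - (2 * (w \<bullet> x)) *\<^sub>R x"] by (auto simp: power2_eq_1_iff)
qed

lemma pointwise:
  fixes x w u v :: "real^'n" and y alpha beta b :: real
  assumes x: "norm x = 1 \<or> x = 0" and y: "y \<in> {-1, 1}" and b: "0 < b"
    and al: "\<bar>alpha\<bar> \<le> 1" and be: "0 \<le> beta"
    and xu: "x \<bullet> u = alpha * (x \<bullet> w) + beta * (x \<bullet> v)"
    and w: "norm w = 1" and u: "norm u = 1" and wu: "w \<bullet> u = alpha"
  defines "fv \<equiv> indicator {b/2..b} (x \<bullet> w) * (2 * (x \<bullet> w) * (- (alpha * (x \<bullet> w) + beta * (x \<bullet> v))))"
  defines "Nv \<equiv> indicator {(x, y). y \<noteq> sgn (u \<bullet> x)} (x, y) :: real"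
  shows "max fv 0 - Nv * max fv 0 - Nv * max (- fv) 0
    \<le> indicator {b/2..b} (x \<bullet> w) *
       (cac ((if y * (w \<bullet> x) < 0 then w - (2 * (w \<bullet> x)) *\<^sub>R x else w) \<bullet> u) - cac (w \<bullet> u))"
proof (cases "x \<bullet> w \<in> {b/2..b}")
  case False
  then show ?thesis unfolding fv_def Nv_def by simp
next
  case True
  define a where "a = x \<bullet> w"
  have a: "b/2 \<le> a" "a \<le> b" "0 < a" using True b unfolding a_def by auto
  have "x \<noteq> 0" using a unfolding a_def by auto
  then have nx: "norm x = 1" using x by auto
  have wx: "w \<bullet> x = a" unfolding a_def by (simp add: inner_commute)
  have fv: "fv = - 2 * a * (x \<bullet> u)" unfolding fv_def using True xu by (simp add: a_def algebra_simps)
  have N01: "Nv = 0 \<or> Nv = 1" unfolding Nv_def by (simp split: split_indicator)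
  have cacwu: "cac (w \<bullet> u) = alpha" using al wu by (simp add: cac_def)
  show ?thesis
  proof (cases "y < 0")
    case True
    then have ywx: "y * (w \<bullet> x) < 0" using wx a by (simp add: mult_neg_pos)
    define w' where "w' = w - (2 * (w \<bullet> x)) *\<^sub>R x"
    have nw': "norm w' = 1" unfolding w'_def by (rule refl_norm1[OF w nx])
    have "\<bar>w' \<bullet> u\<bar> \<le> 1" using Cauchy_Schwarz_ineq2[of w' u] nw' u by simp
    then have "cac (w' \<bullet> u) = w' \<bullet> u" by (simp add: cac_def)
    also have "\<dots> = alpha - 2 * a * (x \<bullet> u)" unfolding w'_def using wu wx by (simp add: inner_diff_left)
    finally have H: "cac (w' \<bullet> u) - cac (w \<bullet> u) = fv" using cacwu fv by simp
    have "max fv 0 - Nv * max fv 0 - Nv * max (- fv) 0 \<le> fv"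
    proof (cases "fv > 0")
      case True then show ?thesis using N01 by auto
    next
      case False
      show ?thesis
      proof (cases "fv = 0")
        case True then show ?thesis by simp
      next
        case False
        with \<open>\<not> fv > 0\<close> have "fv < 0" by simp
        then have "0 < a * (x \<bullet> u)" using fv by simp
        then have "x \<bullet> u > 0" using a by (simp add: zero_less_mult_iff)
        then have "sgn (u \<bullet> x) = 1" by (simp add: inner_commute)
        moreover have "y = -1" using y \<open>y < 0\<close> by auto
        ultimately have "Nv = 1" unfolding Nv_def by simp
        then show ?thesis using \<open>fv < 0\<close> by simp
      qed
    qed
    then show ?thesis using H ywx \<open>x \<bullet> w \<in> {b/2..b}\<close> unfolding w'_def by simp
  next
    case False
    then have y1: "y = 1" using y by auto
    then have "\<not> y * (w \<bullet> x) < 0" using wx a by simp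
    moreover have "max fv 0 - Nv * max fv 0 - Nv * max (- fv) 0 \<le> 0"
    proof (cases "fv > 0")
      case True
      then have "a * (x \<bullet> u) < 0" using fv by simp
      then have "x \<bullet> u < 0" using a by (simp add: mult_less_0_iff)
      then have "sgn (u \<bullet> x) = -1" by (simp add: inner_commute)
      then have "Nv = 1" unfolding Nv_def using y1 by simp
      then show ?thesis using True by simp
    next
      case False
      then show ?thesis using N01 by auto
    qed
    ultimately show ?thesis using \<open>x \<bullet> w \<in> {b/2..b}\<close> by simp
  qed
qed

lemma final_num:
  fixes c e theta beta d b P I :: real
  assumes c: "0 < c" "c < 1/288" and e: "0 < e" and th: "0 < theta" and be: "theta / 20 \<le> beta"
    and d: "3 \<le> d" and b: "b = c * e * theta / sqrt d" and P: "0 < P"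
    and I: "(e * b * beta / (6 * sqrt d) - b^2) * P \<le> I"
  shows "c / (100 * pi) * (e^2 * theta^2) / d \<le> I / P"
proof -
  have sd: "0 < sqrt d" "sqrt d * sqrt d = d" using d by auto
  define K where "K = c * e^2 * theta / d"
  have K0: "0 < K" unfolding K_def using c e th d by simp
  have eq: "e * b * beta / (6 * sqrt d) - b^2 = K * (beta / 6 - c * theta)"
    unfolding K_def b using sd d by (simp add: field_simps power2_eq_square)
  have "c * theta \<le> theta / 288" using c th by (simp add: field_simps)
  moreover have "theta / (100 * pi) \<le> theta / 300"
    using pi_gt3 th by (intro divide_left_mono) auto
  ultimately have lin: "theta / (100 * pi) \<le> beta / 6 - c * theta" using be th by linarith
  have "c / (100 * pi) * (e^2 * theta^2) / d = K * (theta / (100 * pi))"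
    unfolding K_def using d by (simp add: field_simps power2_eq_square)
  also have "\<dots> \<le> K * (beta / 6 - c * theta)" using K0 lin by (intro mult_left_mono) auto
  also have "\<dots> \<le> I / P"
  proof -
    have "K * (beta / 6 - c * theta) * P \<le> I" using I eq by simp
    then show ?thesis by (simp add: pos_le_divide_eq[OF P])
  qed
  finally show ?thesis .
qed

lemma meas_gen:
  fixes w v :: "real^'n" and G :: "real \<Rightarrow> real \<Rightarrow> real"
  assumes G: "(\<lambda>z. G (fst z) (snd z)) \<in> borel_measurable borel"
  shows "(\<lambda>x. G (x \<bullet> w) (x \<bullet> v)) \<in> borel_measurable borel"
proof -
  have "(\<lambda>x::real^'n. (x \<bullet> w, x \<bullet> v)) \<in> measurable borel (borel \<Otimes>\<^sub>M borel)" by measurable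
  then have "(\<lambda>x::real^'n. (x \<bullet> w, x \<bullet> v)) \<in> measurable borel borel" by (simp add: borel_prod)
  from measurable_compose[OF this G] show ?thesis by simp
qed

lemma Fbnd:
  fixes a s alpha beta :: real
  assumes "\<bar>a\<bar> \<le> 1" "\<bar>s\<bar> \<le> 1" "\<bar>alpha\<bar> \<le> 1" "0 \<le> beta" "beta \<le> 1"
  shows "\<bar>indicator S a * (2 * a * (- (alpha * a + beta * s)))\<bar> \<le> (4::real)"
proof -
  have "\<bar>alpha * a\<bar> \<le> 1" "\<bar>beta * s\<bar> \<le> 1" using assms by (auto simp: abs_mult intro: mult_le_one)
  then have "\<bar>alpha * a + beta * s\<bar> \<le> 2" by linarith
  moreover have "\<bar>2 * a\<bar> \<le> 2" using assms by simp
  ultimately have "\<bar>2 * a\<bar> * \<bar>alpha * a + beta * s\<bar> \<le> 2 * 2" by (intro mult_mono) auto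
  then have "\<bar>2 * a * (- (alpha * a + beta * s))\<bar> \<le> 4" by (simp only: abs_mult abs_minus_cancel)
  then show ?thesis by (auto simp: abs_mult split: split_indicator)
qed

lemma cac_bd: "\<bar>cac t\<bar> \<le> 1"
  unfolding cac_def by (auto simp: abs_cos_le_one)

lemma fp_lb:
  fixes a b s alpha beta :: real
  assumes b: "0 < b" and a: "b/2 \<le> a" "a \<le> b" and al: "\<bar>alpha\<bar> \<le> 1" and be: "0 \<le> beta"
  shows "b * (beta * max (- s) 0 - b) \<le> max (2 * a * (- (alpha * a + beta * s))) 0"
proof -
  define X where "X = - (alpha * a + beta * s)"
  have a0: "0 \<le> a" using a b by simp
  have "alpha * a \<le> \<bar>alpha\<bar> * a" using a0 by (intro mult_right_mono) auto
  also have "\<dots> \<le> a" using al a0 by (simp add: mult_left_le_one_le)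
  finally have aa: "alpha * a \<le> b" using a by simp
  have key: "beta * max (- s) 0 - b \<le> max X 0"
  proof (cases "s \<ge> 0")
    case True then show ?thesis using b by simp
  next
    case False
    then have "beta * max (- s) 0 = - (beta * s)" by simp
    then show ?thesis unfolding X_def using aa by simp
  qed
  have "b * (beta * max (- s) 0 - b) \<le> b * max X 0" using key b by (intro mult_left_mono) auto
  also have "\<dots> \<le> (2 * a) * max X 0" using a by (intro mult_right_mono) auto
  also have "\<dots> = max (2 * a * X) 0" using a0 by (simp add: max_def mult_le_0_iff)
  finally show ?thesis unfolding X_def .
qed

theorem lemma9:
  fixes D :: "((real^'n) \<times> real) measure"
    and eta c theta b :: real
    and u w :: "real^'n"
  assumes dim: "CARD('n) \<ge> 3"
    and eta: "0 \<le> eta" "eta < 1/2"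
    and c: "0 < c" "c < 1/288"
    and theta: "0 < theta" "theta \<le> 27/50 * pi"
    and b: "b = c * (1 - 2*eta) * theta / sqrt (real CARD('n))"
    and D_prob: "prob_space D"
    and D_sets: "sets D = sets (borel :: ((real^'n) \<times> real) measure)"
    and D_labels: "AE z in D. snd z \<in> {-1, 1}"
    and D_marg: "distr D borel fst = unif_sphere"
    and u: "norm u = 1"
    and noise: "bounded_noise D eta u"
    and w: "norm w = 1"
    and ang: "theta / 4 \<le> vangle w u" "vangle w u \<le> 5/3 * theta"
  shows "(\<integral>z. indicator {(x, y). x \<bullet> w \<in> {b/2..b}} z *
            (let x = fst z; y = snd z;
                 w' = (if y * (w \<bullet> x) < 0 then w - (2 * (w \<bullet> x)) *\<^sub>R x else w)
             in cos (vangle w' u) - cos (vangle w u)) \<partial>D)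
          / measure D {(x, y). x \<bullet> w \<in> {b/2..b}}
         \<ge> c / (100 * pi) * ((1 - 2*eta)^2 * theta^2) / real CARD('n)"
proof -
  interpret DP: prob_space D by (rule D_prob)
  interpret S: prob_space "unif_sphere :: (real^'n) measure" by (rule unif_prob)
  define d where "d = real CARD('n)"
  have d3: "3 \<le> d" unfolding d_def using dim by simp
  have sd: "1 \<le> sqrt d" using d3 by simp
  define e where "e = 1 - 2 * eta"
  have e: "0 < e" "e \<le> 1" unfolding e_def using eta by auto
  have bd: "b = c * e * theta / sqrt d" using b by (simp add: e_def d_def)
  have b0: "0 < b" unfolding bd using c e theta sd by simp
  have b1: "b \<le> 1/4"
  proof -
    have p: "0 \<le> c * e * theta" using c e theta by simp
    have "c * e * theta * 1 \<le> c * e * theta * sqrt d" using mult_left_mono[OF sd p] .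
    then have "b \<le> c * e * theta" unfolding bd using sd by (simp add: pos_divide_le_eq)
    also have "\<dots> \<le> c * theta" using c e theta by (simp add: mult_le_cancel_left1 mult.commute mult.left_commute)
    also have "\<dots> \<le> 1/288 * 4" using c theta pi_less_4 by (intro mult_mono) auto
    finally show ?thesis by simp
  qed
  define alpha where "alpha = w \<bullet> u"
  have al1: "\<bar>alpha\<bar> \<le> 1" unfolding alpha_def using Cauchy_Schwarz_ineq2[of w u] w u by simp
  define tt where "tt = vangle w u"
  have tt: "tt = arccos alpha" unfolding tt_def alpha_def vangle_def ..
  have ttb: "theta / 4 \<le> tt" "tt \<le> 5/3 * theta" using ang unfolding tt_def by auto
  have ttpi: "tt < pi" using ttb theta by simp
  have tt0: "0 < tt" using ttb theta by simp
  have al2: "alpha \<noteq> 1" using tt tt0 by auto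
  have al3: "alpha \<noteq> -1" using tt ttpi by auto
  have "\<bar>alpha\<bar> < 1" using al1 al2 al3 by (auto simp: abs_le_iff abs_less_iff)
  then have al: "alpha^2 < 1" by (simp add: abs_square_less_1)
  define beta where "beta = sqrt (1 - alpha^2)"
  have be0: "0 < beta" unfolding beta_def using al by simp
  have be1: "beta \<le> 1" unfolding beta_def using al by simp
  have sinb: "sin tt = beta" unfolding tt beta_def using al1 by (simp add: sin_arccos_abs)
  have belb: "theta / 20 \<le> beta" using sin_theta_lb[OF theta ttb] sinb by simp
  define v where "v = (1 / beta) *\<^sub>R (u - alpha *\<^sub>R w)"
  have ww: "w \<bullet> w = 1" and uu: "u \<bullet> u = 1" using w u by (simp_all add: dot_square_norm)
  have wv: "w \<bullet> v = 0" unfolding v_def alpha_def using ww by (simp add: inner_diff_right)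
  have nv: "norm v = 1"
  proof -
    have "(norm (u - alpha *\<^sub>R w))^2 = beta^2"
      unfolding power2_norm_eq_inner beta_def using al
      by (simp add: inner_diff_left inner_diff_right ww uu alpha_def inner_commute[of u w] power2_eq_square algebra_simps)
    then have "norm (u - alpha *\<^sub>R w) = beta" using be0 by (simp add: power2_eq_iff_nonneg)
    then show ?thesis unfolding v_def using be0 by simp
  qed
  have udec: "x \<bullet> u = alpha * (x \<bullet> w) + beta * (x \<bullet> v)" for x :: "real^'n"
  proof -
    have "u = alpha *\<^sub>R w + beta *\<^sub>R v" unfolding v_def using be0 by simp
    then show ?thesis by (metis inner_add_right inner_scaleR_right)
  qed
  let ?h = "indicator {b/2..b} :: real \<Rightarrow> real"
  have hm[measurable]: "?h \<in> borel_measurable borel" by measurable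
  define F where "F a s = ?h a * (2 * a * (- (alpha * a + beta * s)))" for a s
  have Fm[measurable]: "(\<lambda>z. F (fst z) (snd z)) \<in> borel_measurable borel"
    unfolding F_def by (rule meas_prod) measurable
  have Fb: "\<bar>F a s\<bar> \<le> 4" if "\<bar>a\<bar> \<le> 1" "\<bar>s\<bar> \<le> 1" for a s
    unfolding F_def using Fbnd[OF that al1 less_imp_le[OF be0] be1] .
  define f where "f x = F (x \<bullet> w) (x \<bullet> v)" for x
  define fp where "fp x = max (f x) 0" for x
  define fm where "fm x = max (- f x) 0" for x
  have fpm[measurable]: "fp \<in> borel_measurable borel"
  proof -
    have "(\<lambda>z. max (F (fst z) (snd z)) 0) \<in> borel_measurable borel" by measurable
    from meas_gen[OF this, of w v] show ?thesis unfolding fp_def f_def by simp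
  qed
  have fmm[measurable]: "fm \<in> borel_measurable borel"
  proof -
    have "(\<lambda>z. max (- F (fst z) (snd z)) 0) \<in> borel_measurable borel" by measurable
    from meas_gen[OF this, of w v] show ?thesis unfolding fm_def f_def by simp
  qed
  have intfp: "integrable unif_sphere fp"
  proof -
    have "integrable unif_sphere (\<lambda>x. (\<lambda>a s. max (F a s) 0) (x \<bullet> w) (x \<bullet> v))"
    proof (rule int_gen[OF _ _ w nv, where B=4])
      fix a s :: real assume "\<bar>a\<bar> \<le> 1" "\<bar>s\<bar> \<le> 1"
      then have "\<bar>F a s\<bar> \<le> 4" by (rule Fb)
      then show "\<bar>max (F a s) 0\<bar> \<le> 4" by auto
    qed measurable
    then show ?thesis unfolding fp_def f_def by simp
  qed
  have intfm: "integrable unif_sphere fm"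
  proof -
    have "integrable unif_sphere (\<lambda>x. (\<lambda>a s. max (- F a s) 0) (x \<bullet> w) (x \<bullet> v))"
    proof (rule int_gen[OF _ _ w nv, where B=4])
      fix a s :: real assume "\<bar>a\<bar> \<le> 1" "\<bar>s\<bar> \<le> 1"
      then have "\<bar>F a s\<bar> \<le> 4" by (rule Fb)
      then show "\<bar>max (- F a s) 0\<bar> \<le> 4" by auto
    qed measurable
    then show ?thesis unfolding fm_def f_def by simp
  qed
  note fstD[measurable] = fst_D[OF D_prob D_sets D_marg]
  note sndD[measurable] = snd_D[OF D_prob D_sets D_marg]
  define N where "N = ({(x, y). y \<noteq> sgn (u \<bullet> x)} :: ((real^'n) \<times> real) set)"
  have Nm: "N \<in> sets D" unfolding N_def by (rule Nset_sets[OF D_prob D_sets D_marg])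
  define W where "W z = (if snd z * (w \<bullet> fst z) < 0 then w - (2 * (w \<bullet> fst z)) *\<^sub>R fst z else w)" for z :: "(real^'n) \<times> real"
  have Wm[measurable]: "W \<in> borel_measurable D" unfolding W_def by measurable
  define H where "H z = ?h (fst z \<bullet> w) * (cac (W z \<bullet> u) - cac (w \<bullet> u))" for z
  define L where "L z = fp (fst z) - indicator N z * fp (fst z) - indicator N z * fm (fst z)" for z
  have Hm[measurable]: "H \<in> borel_measurable D" unfolding H_def by measurable
  have GH: "(\<lambda>z. indicator {(x, y). x \<bullet> w \<in> {b/2..b}} z *
            (let x = fst z; y = snd z;
                 w' = (if y * (w \<bullet> x) < 0 then w - (2 * (w \<bullet> x)) *\<^sub>R x else w)
             in cos (vangle w' u) - cos (vangle w u))) = H"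
  proof (rule ext)
    fix z :: "(real^'n) \<times> real"
    obtain x y where z: "z = (x, y)" by (cases z)
    show "indicator {(x, y). x \<bullet> w \<in> {b/2..b}} z *
            (let x = fst z; y = snd z;
                 w' = (if y * (w \<bullet> x) < 0 then w - (2 * (w \<bullet> x)) *\<^sub>R x else w)
             in cos (vangle w' u) - cos (vangle w u)) = H z"
      unfolding H_def W_def z by (simp add: vangle_def cos_arccos_cac indicator_def)
  qed
  have intH: "integrable D H"
  proof (rule D_int_bdd[OF D_prob D_sets D_marg Hm, where B=2])
    fix z
    have "\<bar>cac (W z \<bullet> u) - cac (w \<bullet> u)\<bar> \<le> 2" using cac_bd[of "W z \<bullet> u"] cac_bd[of "w \<bullet> u"] by linarith
    then show "\<bar>H z\<bar> \<le> 2" unfolding H_def by (auto simp: abs_mult split: split_indicator)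
  qed
  have intfpD: "integrable D (\<lambda>z. fp (fst z))"
    using intfp D_marg by (subst integrable_distr_eq[symmetric, OF fstD fpm]) simp
  have intfmD: "integrable D (\<lambda>z. fm (fst z))"
    using intfm D_marg by (subst integrable_distr_eq[symmetric, OF fstD fmm]) simp
  have intNp: "integrable D (\<lambda>z. indicator N z * fp (fst z))"
    using integrable_mult_indicator[OF Nm intfpD] by simp
  have intNm: "integrable D (\<lambda>z. indicator N z * fm (fst z))"
    using integrable_mult_indicator[OF Nm intfmD] by simp
  have intL: "integrable D L" unfolding L_def using intfpD intNp intNm by simp
  have AE: "AE z in D. L z \<le> H z"
    using D_AE_norm[OF D_prob D_sets D_marg] D_labels
  proof eventually_elim
    case (elim z)
    obtain x y where z: "z = (x, y)" by (cases z)
    have xn: "norm x = 1 \<or> x = 0" and yl: "y \<in> {-1, 1}" using elim z by auto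
    have wu: "w \<bullet> u = alpha" unfolding alpha_def ..
    note pw = pointwise[where x=x and y=y and b=b and alpha=alpha and beta=beta and u=u and w=w and v=v,
        OF xn yl b0 al1 less_imp_le[OF be0] udec w u wu]
    have eqL: "L z = max (F (x \<bullet> w) (x \<bullet> v)) 0 - indicator {(x, y). y \<noteq> sgn (u \<bullet> x)} (x, y) * max (F (x \<bullet> w) (x \<bullet> v)) 0
          - indicator {(x, y). y \<noteq> sgn (u \<bullet> x)} (x, y) * max (- F (x \<bullet> w) (x \<bullet> v)) 0"
      unfolding L_def fp_def fm_def f_def N_def z by simp
    have eqH: "H z = ?h (x \<bullet> w) * (cac ((if y * (w \<bullet> x) < 0 then w - (2 * (w \<bullet> x)) *\<^sub>R x else w) \<bullet> u) - cac (w \<bullet> u))"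
      unfolding H_def W_def z by simp
    show ?case unfolding eqL eqH F_def by (rule pw)
  qed
  have intge: "integral\<^sup>L D L \<le> integral\<^sup>L D H" by (rule integral_mono_AE[OF intL intH AE])
  have Lval: "integral\<^sup>L D L = integral\<^sup>L unif_sphere fp - integral\<^sup>L D (\<lambda>z. indicator N z * fp (fst z))
      - integral\<^sup>L D (\<lambda>z. indicator N z * fm (fst z))"
    unfolding L_def using intfpD intNp intNm D_int[OF D_prob D_sets D_marg fpm] by simp
  have n1: "integral\<^sup>L D (\<lambda>z. indicator N z * fp (fst z)) \<le> eta * integral\<^sup>L unif_sphere fp"
    unfolding N_def by (rule noise_int[OF D_prob D_sets D_marg noise eta(1) fpm _ intfp]) (simp add: fp_def)
  have n2: "integral\<^sup>L D (\<lambda>z. indicator N z * fm (fst z)) \<le> eta * integral\<^sup>L unif_sphere fm"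
    unfolding N_def by (rule noise_int[OF D_prob D_sets D_marg noise eta(1) fmm _ intfm]) (simp add: fm_def)
  have Dlow: "(1 - eta) * integral\<^sup>L unif_sphere fp - eta * integral\<^sup>L unif_sphere fm \<le> integral\<^sup>L D H"
    using intge Lval n1 n2 by (simp add: algebra_simps)
  define PS where "PS = integral\<^sup>L unif_sphere (\<lambda>x. ?h (x \<bullet> w))"
  have band_m: "{x::real^'n. x \<bullet> w \<in> {b/2..b}} \<in> sets borel" by measurable
  have PSb: "PS = measure unif_sphere {x::real^'n. x \<bullet> w \<in> {b/2..b}}"
  proof -
    have "(\<lambda>x. ?h (x \<bullet> w)) = indicator {x::real^'n. x \<bullet> w \<in> {b/2..b}}"
      by (auto simp: indicator_def)
    then show ?thesis unfolding PS_def by simp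
  qed
  have PD: "measure D {(x, y). x \<bullet> w \<in> {b/2..b}} = PS"
  proof -
    have "{(x, y). x \<bullet> w \<in> {b/2..b}} = ({z. fst z \<in> {x::real^'n. x \<bullet> w \<in> {b/2..b}}} :: ((real^'n) \<times> real) set)" by auto
    then show ?thesis using D_measure[OF D_prob D_sets D_marg band_m] PSb by simp
  qed
  have Ppos: "0 < PS" unfolding PSb using band_pos[OF b0 _ w nv wv] b1 by simp
  have intG: "integrable unif_sphere (\<lambda>x. G (x \<bullet> w) (x \<bullet> v))"
    if "(\<lambda>z. G (fst z) (snd z)) \<in> borel_measurable borel" "\<And>a s. \<bar>a\<bar> \<le> 1 \<Longrightarrow> \<bar>s\<bar> \<le> 1 \<Longrightarrow> \<bar>G a s\<bar> \<le> B"
    for G :: "real \<Rightarrow> real \<Rightarrow> real" and B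
    using int_gen[OF that(1) that(2) w nv] by blast
  have intPS: "integrable unif_sphere (\<lambda>x. ?h (x \<bullet> w))"
  proof (rule intG[of "\<lambda>a s. ?h a" 1])
    show "(\<lambda>z::real \<times> real. ?h (fst z)) \<in> borel_measurable borel" by (rule meas_prod) measurable
  qed (auto split: split_indicator)
  have intI1: "integrable unif_sphere (\<lambda>x. ?h (x \<bullet> w) * (x \<bullet> w) * (x \<bullet> v))"
  proof (rule intG[of "\<lambda>a s. ?h a * a * s" 1])
    show "(\<lambda>z. ?h (fst z) * fst z * snd z) \<in> borel_measurable borel" by (rule meas_prod) measurable
    fix a s :: real assume "\<bar>a\<bar> \<le> 1" "\<bar>s\<bar> \<le> 1"
    then show "\<bar>?h a * a * s\<bar> \<le> 1" by (auto simp: abs_mult intro: mult_le_one split: split_indicator)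
  qed
  have intm1: "integrable unif_sphere (\<lambda>x. ?h (x \<bullet> w) * max (- (x \<bullet> v)) 0)"
  proof (rule intG[of "\<lambda>a s. ?h a * max (- s) 0" 1])
    show "(\<lambda>z. ?h (fst z) * max (- snd z) 0) \<in> borel_measurable borel" by (rule meas_prod) measurable
    fix a s :: real assume "\<bar>a\<bar> \<le> 1" "\<bar>s\<bar> \<le> 1"
    then show "\<bar>?h a * max (- s) 0\<bar> \<le> 1" by (auto simp: abs_mult split: split_indicator)
  qed
  have intm2: "integrable unif_sphere (\<lambda>x. ?h (x \<bullet> w) * max (x \<bullet> v) 0)"
  proof (rule intG[of "\<lambda>a s. ?h a * max s 0" 1])
    show "(\<lambda>z. ?h (fst z) * max (snd z) 0) \<in> borel_measurable borel" by (rule meas_prod) measurable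
    fix a s :: real assume "\<bar>a\<bar> \<le> 1" "\<bar>s\<bar> \<le> 1"
    then show "\<bar>?h a * max s 0\<bar> \<le> 1" by (auto simp: abs_mult split: split_indicator)
  qed
  have intf: "integrable unif_sphere f"
    unfolding f_def by (rule intG[OF Fm Fb])
  define I1 where "I1 = integral\<^sup>L unif_sphere (\<lambda>x. ?h (x \<bullet> w) * (x \<bullet> w) * (x \<bullet> v))"
  have I10: "I1 = 0"
  proof -
    have Gm: "(\<lambda>z. ?h (fst z) * fst z * snd z) \<in> borel_measurable borel" by (rule meas_prod) measurable
    from flip[OF Gm nv wv] have "I1 = integral\<^sup>L unif_sphere (\<lambda>x. - (?h (x \<bullet> w) * (x \<bullet> w) * (x \<bullet> v)))"
      unfolding I1_def by simp
    then have "I1 = - I1" unfolding I1_def by simp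
    then show ?thesis by simp
  qed
  have Ef: "- 2 * b^2 * PS \<le> integral\<^sup>L unif_sphere f"
  proof -
    have "- 2 * b^2 * PS = integral\<^sup>L unif_sphere (\<lambda>x. - 2 * b^2 * ?h (x \<bullet> w) - 2 * beta * (?h (x \<bullet> w) * (x \<bullet> w) * (x \<bullet> v)))"
      using intPS intI1 I10 unfolding PS_def I1_def by simp
    also have "\<dots> \<le> integral\<^sup>L unif_sphere f"
    proof (rule integral_mono[OF _ intf])
      show "integrable unif_sphere (\<lambda>x. - 2 * b^2 * ?h (x \<bullet> w) - 2 * beta * (?h (x \<bullet> w) * (x \<bullet> w) * (x \<bullet> v)))"
        using intPS intI1 by simp
      fix x :: "real^'n"
      show "- 2 * b^2 * ?h (x \<bullet> w) - 2 * beta * (?h (x \<bullet> w) * (x \<bullet> w) * (x \<bullet> v)) \<le> f x"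
      proof (cases "x \<bullet> w \<in> {b/2..b}")
        case True
        then have a: "0 \<le> x \<bullet> w" "x \<bullet> w \<le> b" using b0 by auto
        have "alpha * (x \<bullet> w)^2 \<le> \<bar>alpha\<bar> * (x \<bullet> w)^2" by (intro mult_right_mono) auto
        also have "\<dots> \<le> (x \<bullet> w)^2" using al1 by (simp add: mult_left_le_one_le)
        also have "\<dots> \<le> b^2" using a by (intro power_mono) auto
        finally have "alpha * (x \<bullet> w)^2 \<le> b^2" .
        then show ?thesis using True unfolding f_def F_def by (simp add: algebra_simps power2_eq_square)
      next
        case False
        then show ?thesis unfolding f_def F_def by simp
      qed
    qed
    finally show ?thesis .
  qed
  have Efpm: "integral\<^sup>L unif_sphere fp - integral\<^sup>L unif_sphere fm = integral\<^sup>L unif_sphere f"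
  proof -
    have "f = (\<lambda>x. fp x - fm x)" unfolding fp_def fm_def by (auto simp: max_def)
    then show ?thesis using intfp intfm by simp
  qed
  define m1 where "m1 = integral\<^sup>L unif_sphere (\<lambda>x. ?h (x \<bullet> w) * max (- (x \<bullet> v)) 0)"
  define m2 where "m2 = integral\<^sup>L unif_sphere (\<lambda>x. ?h (x \<bullet> w) * max (x \<bullet> v) 0)"
  have m12: "m1 = m2"
  proof -
    have Gm: "(\<lambda>z. ?h (fst z) * max (- snd z) 0) \<in> borel_measurable borel" by (rule meas_prod) measurable
    from flip[OF Gm nv wv] show ?thesis unfolding m1_def m2_def by simp
  qed
  have Eabs: "integral\<^sup>L unif_sphere (\<lambda>x. ?h (x \<bullet> w) * \<bar>x \<bullet> v\<bar>) = m1 + m2"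
  proof -
    have "(\<lambda>x. ?h (x \<bullet> w) * \<bar>x \<bullet> v\<bar>) = (\<lambda>x. ?h (x \<bullet> w) * max (- (x \<bullet> v)) 0 + ?h (x \<bullet> w) * max (x \<bullet> v) 0)"
      by (auto simp: max_def algebra_simps)
    then show ?thesis unfolding m1_def m2_def using intm1 intm2 by simp
  qed
  have F3i: "PS / (3 * sqrt d) \<le> integral\<^sup>L unif_sphere (\<lambda>x. ?h (x \<bullet> w) * \<bar>x \<bullet> v\<bar>)"
    unfolding PS_def d_def by (rule F3[OF b0 b1 w nv wv dim])
  have m1lb: "PS / (6 * sqrt d) \<le> m1" using F3i Eabs m12 by simp
  have Efp: "b * beta * m1 - b^2 * PS \<le> integral\<^sup>L unif_sphere fp"
  proof -
    have "b * beta * m1 - b^2 * PS = integral\<^sup>L unif_sphere (\<lambda>x. b * beta * (?h (x \<bullet> w) * max (- (x \<bullet> v)) 0) - b^2 * ?h (x \<bullet> w))"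
      using intPS intm1 unfolding PS_def m1_def by simp
    also have "\<dots> \<le> integral\<^sup>L unif_sphere fp"
    proof (rule integral_mono[OF _ intfp])
      show "integrable unif_sphere (\<lambda>x. b * beta * (?h (x \<bullet> w) * max (- (x \<bullet> v)) 0) - b^2 * ?h (x \<bullet> w))"
        using intPS intm1 by simp
      fix x :: "real^'n"
      show "b * beta * (?h (x \<bullet> w) * max (- (x \<bullet> v)) 0) - b^2 * ?h (x \<bullet> w) \<le> fp x"
      proof (cases "x \<bullet> w \<in> {b/2..b}")
        case True
        then have "b * (beta * max (- (x \<bullet> v)) 0 - b) \<le> max (2 * (x \<bullet> w) * (- (alpha * (x \<bullet> w) + beta * (x \<bullet> v)))) 0"
          using b0 al1 be0 by (intro fp_lb) auto
        then show ?thesis using True unfolding fp_def f_def F_def by (simp add: algebra_simps power2_eq_square)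
      next
        case False
        then show ?thesis unfolding fp_def by simp
      qed
    qed
    finally show ?thesis .
  qed
  define Efp where "Efp = integral\<^sup>L unif_sphere fp"
  define Efm where "Efm = integral\<^sup>L unif_sphere fm"
  define Ef where "Ef = integral\<^sup>L unif_sphere f"
  define Q where "Q = PS / (6 * sqrt d)"
  define IH where "IH = integral\<^sup>L D H"
  have sdp: "0 < sqrt d" using sd by simp
  have bb: "0 \<le> b * beta" using b0 be0 by simp
  have A4: "e * (b * beta * Q) \<le> e * (b * beta * m1)"
    using m1lb e bb unfolding Q_def by (intro mult_left_mono) auto
  have A1: "e * (b * beta * m1) - e * (b^2 * PS) \<le> e * Efp"
  proof -
    have "e * (b * beta * m1 - b^2 * PS) \<le> e * Efp" using Efp e unfolding Efp_def by (intro mult_left_mono) auto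
    then show ?thesis by (simp add: right_diff_distrib)
  qed
  have A3: "- 2 * (eta * (b^2 * PS)) \<le> eta * Ef"
  proof -
    have "eta * (- 2 * b^2 * PS) \<le> eta * Ef" using Ef eta unfolding Ef_def by (intro mult_left_mono) auto
    then show ?thesis by simp
  qed
  have E1: "e * (b^2 * PS) = b^2 * PS - 2 * (eta * (b^2 * PS))" unfolding e_def by (simp add: algebra_simps)
  have E2: "e * Efp = Efp - 2 * (eta * Efp)" unfolding e_def by (simp add: algebra_simps)
  have E3: "eta * Ef = eta * Efp - eta * Efm" using Efpm unfolding Efp_def Efm_def Ef_def by (simp add: algebra_simps)
  have DL: "Efp - eta * Efp - eta * Efm \<le> IH" using Dlow unfolding Efp_def Efm_def IH_def by (simp add: algebra_simps)
  have LL: "(e * b * beta / (6 * sqrt d) - b^2) * PS = e * (b * beta * Q) - b^2 * PS"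
    unfolding Q_def using sdp by (simp add: field_simps)
  have main: "(e * b * beta / (6 * sqrt d) - b^2) * PS \<le> IH"
    using A4 A1 A3 E1 E2 E3 DL LL by linarith
  have fin: "c / (100 * pi) * (e^2 * theta^2) / d \<le> IH / PS"
    by (rule final_num[OF c e(1) theta(1) belb d3 bd Ppos main])
  show ?thesis using fin unfolding IH_def GH PD e_def d_def by simp
qed

end
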